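(* The learning problem for $\mathbf{LTL}(\mathbf{X},\wedge)$ is in $\mathsf{NP}$: given words $u_1,\dots,u_n,v_1,\dots,v_n\in\Sigma^*$ and $k\in\mathbb{N}$ encoded in binary, deciding whether there exists a formula of $\mathbf{LTL}(\mathbf{X},\wedge)$ of size at most $k$ separating $u_1,\dots,u_n$ from $v_1,\dots,v_n$ is in $\mathsf{NP}$.
   Context: Alphabet $\Sigma=\{a,b\}$. Words are nonempty, indexed from position 1. $\mathbf{LTL}(\mathbf{X},\wedge)$: formulas built from letters $c\in\Sigma$, $\wedge$, and $\mathbf{X}$, with semantics on a word $w$ of length $\ell$ at position $i\in[1,\ell]$: $w,i\models c$ iff $w(i)=c$; $\wedge$ as usual; $w,i\models\mathbf{X}\phi$ iff $i<\ell$ and $w,i+1\models\phi$; $w\models\phi$ iff $w,1\models\phi$. Size = number of nodes of the syntax tree. $\phi$ separates $u_1,\dots,u_n$ from $v_1,\dots,v_m$ if all $u_j\models\phi$ and all $v_j\not\models\phi$. The input size is $O(n\ell+\log k)$ where $\ell$ is the maximal word length. *)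

theory Defs
  imports Main
begin

datatype letter = La | Lb

datatype ltl = Lit letter | Conj ltl ltl | Nxt ltl

fun fsize :: "ltl \<Rightarrow> nat" where
  "fsize (Lit c) = 1"
| "fsize (Conj f g) = 1 + fsize f + fsize g"
| "fsize (Nxt f) = 1 + fsize f"

text \<open>Semantics at position i (positions are 1-based, 1 \<le> i \<le> length w).\<close>
fun holds :: "letter list \<Rightarrow> nat \<Rightarrow> ltl \<Rightarrow> bool" where
  "holds w i (Lit c) = (1 \<le> i \<and> i \<le> length w \<and> w ! (i - 1) = c)"
| "holds w i (Conj f g) = (holds w i f \<and> holds w i g)"
| "holds w i (Nxt f) = (1 \<le> i \<and> i < length w \<and> holds w (i + 1) f)"

definition models :: "letter list \<Rightarrow> ltl \<Rightarrow> bool" where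
  "models w f = holds w 1 f"

definition separates :: "ltl \<Rightarrow> letter list list \<Rightarrow> letter list list \<Rightarrow> bool" where
  "separates f us vs = ((\<forall>u\<in>set us. models u f) \<and> (\<forall>v\<in>set vs. \<not> models v f))"

fun enc_letter :: "letter \<Rightarrow> nat" where
  "enc_letter La = 1" | "enc_letter Lb = 2"

definition enc_word :: "letter list \<Rightarrow> nat list" where
  "enc_word w = map enc_letter w @ [3]"

fun enc_bin :: "nat \<Rightarrow> nat list" where
  "enc_bin k = (if k = 0 then [] else (if k mod 2 = 0 then 5 else 6) # enc_bin (k div 2))"

definition enc_inst :: "letter list list \<Rightarrow> letter list list \<Rightarrow> nat \<Rightarrow> nat list" where
  "enc_inst us vs k = concat (map enc_word us) @ [4] @ concat (map enc_word vs) @ [4] @ enc_bin k"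

definition LEARN_LTL_X_AND :: "nat list set" where
  "LEARN_LTL_X_AND = {enc_inst us vs k | us vs k.
      length us = length vs \<and> (\<forall>w\<in>set (us @ vs). w \<noteq> []) \<and>
      (\<exists>f. fsize f \<le> k \<and> separates f us vs)}"

text \<open>States 0..Q-1 (0 initial, 1 accepting and halting), tape symbols 0..S-1
  (0 is the blank), head moves in {-1,0,1}.\<close>
record tm =
  tm_Q :: nat
  tm_S :: nat
  tm_delta :: "nat \<Rightarrow> nat \<Rightarrow> nat \<times> nat \<times> int"

definition tm_wf :: "tm \<Rightarrow> bool" where
  "tm_wf M = (2 \<le> tm_Q M \<and> 1 \<le> tm_S M \<and>
     (\<forall>q<tm_Q M. \<forall>s<tm_S M. case tm_delta M q s of (q', s', m) \<Rightarrow>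
        q' < tm_Q M \<and> s' < tm_S M \<and> m \<in> {-1, 0, 1}))"

type_synonym config = "nat \<times> int \<times> (int \<Rightarrow> nat)"

fun tm_step :: "tm \<Rightarrow> config \<Rightarrow> config" where
  "tm_step M (q, h, tp) = (if q = 1 then (q, h, tp) else
     (case tm_delta M q (tp h) of (q', s', m) \<Rightarrow> (q', h + m, tp(h := s'))))"

definition tm_init :: "nat list \<Rightarrow> config" where
  "tm_init x = (0, 0, \<lambda>i. if 0 \<le> i \<and> nat i < length x then x ! nat i else 0)"

definition accepts_within :: "tm \<Rightarrow> nat list \<Rightarrow> nat \<Rightarrow> bool" where
  "accepts_within M x t = (fst ((tm_step M ^^ t) (tm_init x)) = 1)"

definition in_NP :: "nat list set \<Rightarrow> bool" where
  "in_NP L = (\<exists>M c d. tm_wf M \<and> 7 < tm_S M \<and>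
     (\<forall>x. set x \<subseteq> {1..6} \<longrightarrow>
        (x \<in> L \<longleftrightarrow> (\<exists>y. set y \<subseteq> {1, 2} \<and> length y \<le> c * (length x + 1) ^ d \<and>
                        accepts_within M (x @ [7] @ y) (c * (length x + 1) ^ d)))))"

end

theory Submission
  imports Defs "HOL-Library.Countable"
begin


datatype 'a res = Acc | Rej | Cont 'a

definition tape :: "nat list \<Rightarrow> int \<Rightarrow> nat" where
  "tape xs = (\<lambda>i. if 0 \<le> i \<and> nat i < length xs then xs ! nat i else 0)"

definition fixc :: "nat \<Rightarrow> nat \<Rightarrow> nat" where
  "fixc c c' = (if c' = 0 \<or> 32 \<le> c' then c else c')"

fun pass :: "('a \<Rightarrow> nat \<Rightarrow> 'a \<times> nat) \<Rightarrow> 'a \<Rightarrow> nat list \<Rightarrow> 'a \<times> nat list" where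
  "pass R st [] = (st, [])"
| "pass R st (c # cs) = (let r = R st c; p = pass R (fst r) cs in (fst p, fixc c (snd r) # snd p))"

lemma pass_append: "pass R st (xs @ ys) =
  (let p1 = pass R st xs; p2 = pass R (fst p1) ys in (fst p2, snd p1 @ snd p2))"
  by (induction xs arbitrary: st) (auto simp: Let_def)

lemma pass_length: "length (snd (pass R st xs)) = length xs"
  by (induction xs arbitrary: st) (auto simp: Let_def)

lemma pass_nz: "\<forall>c\<in>set xs. c \<noteq> 0 \<Longrightarrow> \<forall>c\<in>set (snd (pass R st xs)). c \<noteq> 0"
  by (induction xs arbitrary: st) (auto simp: Let_def fixc_def)

lemma pass_lt: "\<forall>c\<in>set xs. c < 32 \<Longrightarrow> \<forall>c\<in>set (snd (pass R st xs)). c < 32"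
  by (induction xs arbitrary: st) (auto simp: Let_def fixc_def)

definition senc :: "bool \<times> 'a::countable \<Rightarrow> nat" where
  "senc x = to_nat x + 3"

definition dec' :: "'a::countable \<Rightarrow> nat \<Rightarrow> bool \<times> 'a" where
  "dec' st0 q = (if q = 0 then (True, st0) else from_nat (q - 3))"

lemma dec'_senc[simp]: "dec' st0 (senc x) = x"
  by (simp add: dec'_def senc_def)

lemma senc_ge[simp]: "senc x \<noteq> 0" "senc x \<noteq> 1" "senc x \<noteq> 2" "senc x \<noteq> Suc 0"
  by (auto simp: senc_def)

definition gdelta :: "('a::countable \<Rightarrow> nat \<Rightarrow> 'a \<times> nat) \<Rightarrow> ('a \<Rightarrow> 'a res) \<Rightarrow> 'a \<Rightarrow> nat \<Rightarrow> nat \<Rightarrow> nat \<times> nat \<times> int" where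
  "gdelta R E st0 q c = (if q = 2 then (2, c, 0) else
     (case dec' st0 q of (d, st) \<Rightarrow>
       if d then (if c = 0 then (case E st of Acc \<Rightarrow> (1, 0, 0) | Rej \<Rightarrow> (2, 0, 0)
                                | Cont st' \<Rightarrow> (senc (False, st'), 0, -1))
                  else (case R st c of (st', c') \<Rightarrow> (senc (True, st'), fixc c c', 1)))
       else (if c = 0 then (senc (True, st), 0, 1) else (q, c, -1))))"

definition gM :: "('a::{countable,finite} \<Rightarrow> nat \<Rightarrow> 'a \<times> nat) \<Rightarrow> ('a \<Rightarrow> 'a res) \<Rightarrow> 'a \<Rightarrow> tm" where
  "gM R E st0 = \<lparr>tm_Q = Max (range (senc :: bool \<times> 'a \<Rightarrow> nat)) + 1, tm_S = 32, tm_delta = gdelta R E st0\<rparr>"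

lemma gM_wf: "tm_wf (gM R E st0)"
proof -
  let ?Q = "Max (range (senc :: bool \<times> 'a \<Rightarrow> nat)) + 1"
  have fin: "finite (range (senc :: bool \<times> 'a \<Rightarrow> nat))" by (rule finite_imageI) simp
  have lt: "senc x < ?Q" for x :: "bool \<times> 'a"
    using Max_ge[OF fin, of "senc x"] by (simp add: less_Suc_eq_le)
  have q3: "3 \<le> ?Q" using lt[of "(True, undefined)"] by (simp add: senc_def)
  show ?thesis
    unfolding tm_wf_def gM_def
    using lt q3 by (auto simp: gdelta_def fixc_def split: prod.splits res.splits)
qed

abbreviation "step R E st0 \<equiv> tm_step (gM R E st0)"

lemma step_eq: "step R E st0 (q, h, tp) = (if q = 1 then (q, h, tp) else
   (case gdelta R E st0 q (tp h) of (q', s', m) \<Rightarrow> (q', h + m, tp(h := s'))))"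
  by (simp add: gM_def)

lemma dead: "(step R E st0 ^^ t) (2, h, tp) = (2, h, tp)"
  by (induction t) (auto simp: gM_def gdelta_def)

lemma acc_abs: "(step R E st0 ^^ t) (1, h, tp) = (1, h, tp)"
  by (induction t) (auto simp: step_eq)

lemma tape_app_upd: "length ys = i \<Longrightarrow> i < length xs \<Longrightarrow>
  (tape (ys @ drop i xs))(int i := c) = tape (ys @ [c] @ drop (Suc i) xs)"
  by (auto simp: tape_def fun_eq_iff nth_append Cons_nth_drop_Suc[symmetric] nat_less_iff
      split: if_splits)


lemma tape_nth: "i < length xs \<Longrightarrow> tape xs (int i) = xs ! i"
  by (simp add: tape_def)

lemma sweep:
  assumes nz: "\<forall>c\<in>set xs. c \<noteq> 0" and q: "q \<noteq> 1" "q \<noteq> 2" "dec' st0 q = (True, st)"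
  shows "i \<le> length xs \<Longrightarrow> \<exists>q'. (step R E st0 ^^ i) (q, 0, tape xs) =
     (q', int i, tape (snd (pass R st (take i xs)) @ drop i xs)) \<and> q' \<noteq> 1 \<and> q' \<noteq> 2 \<and>
     dec' st0 q' = (True, fst (pass R st (take i xs)))"
proof (induction i)
  case 0
  then show ?case using q by simp
next
  case (Suc i)
  then obtain q' where IH: "(step R E st0 ^^ i) (q, 0, tape xs) =
     (q', int i, tape (snd (pass R st (take i xs)) @ drop i xs))" "q' \<noteq> 1" "q' \<noteq> 2"
     "dec' st0 q' = (True, fst (pass R st (take i xs)))" by auto
  let ?ys = "snd (pass R st (take i xs))"
  have il: "i < length xs" using Suc by simp
  have ly: "length ?ys = i" using il by (simp add: pass_length)
  have tv: "tape (?ys @ drop i xs) (int i) = xs ! i"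
    using il ly by (simp add: tape_def nth_append)
  have nzi: "xs ! i \<noteq> 0" using nz il by auto
  have tk: "take (Suc i) xs = take i xs @ [xs ! i]" using il by (simp add: take_Suc_conv_app_nth)
  obtain s1 c1 where Rc: "R (fst (pass R st (take i xs))) (xs ! i) = (s1, c1)" by force
  have g: "gdelta R E st0 q' (xs ! i) = (senc (True, s1), fixc (xs ! i) c1, 1)"
    using IH(3,4) nzi Rc by (simp add: gdelta_def)
  have st1: "(step R E st0 ^^ Suc i) (q, 0, tape xs) = step R E st0 (q', int i, tape (?ys @ drop i xs))"
    using IH(1) by simp
  also have "\<dots> = (senc (True, s1), int i + 1, (tape (?ys @ drop i xs))(int i := fixc (xs ! i) c1))"
    using IH(2) tv g by (simp add: gM_def)
  also have "\<dots> = (senc (True, s1), int (Suc i), tape ((?ys @ [fixc (xs ! i) c1]) @ drop (Suc i) xs))"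
    using tape_app_upd[OF ly il] by simp
  finally show ?case
    using Rc by (auto simp: tk pass_append Let_def)
qed


lemma back_sweep:
  assumes nz: "\<forall>c\<in>set ys. c \<noteq> 0" and q: "q \<noteq> 1" "q \<noteq> 2" "dec' st0 q = (False, st)"
  shows "j \<le> length ys \<Longrightarrow> (step R E st0 ^^ j) (q, int (length ys) - 1, tape ys) =
     (q, int (length ys) - 1 - int j, tape ys)"
proof (induction j)
  case 0
  then show ?case by simp
next
  case (Suc j)
  let ?h = "int (length ys) - 1 - int j"
  have h: "?h = int (length ys - 1 - j)" "length ys - 1 - j < length ys" using Suc by auto
  have tv: "tape ys ?h = ys ! (length ys - 1 - j)" unfolding h(1) by (rule tape_nth[OF h(2)])
  have nzi: "ys ! (length ys - 1 - j) \<noteq> 0" using nz h by auto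
  have upd: "(tape ys)(?h := ys ! (length ys - 1 - j)) = tape ys" using tv by (metis fun_upd_triv)
  have g: "gdelta R E st0 q (ys ! (length ys - 1 - j)) = (q, ys ! (length ys - 1 - j), -1)"
    using q nzi by (simp add: gdelta_def)
  have "(step R E st0 ^^ Suc j) (q, int (length ys) - 1, tape ys) = step R E st0 (q, ?h, tape ys)"
    using Suc by simp
  also have "\<dots> = (q, ?h + -1, tape ys)"
    using q(1) tv g upd by (simp add: gM_def)
  finally show ?case by simp
qed


lemma round_first:
  assumes nz: "\<forall>c\<in>set xs. c \<noteq> 0" and q: "q \<noteq> 1" "q \<noteq> 2" "dec' st0 q = (True, st)"
  shows "(step R E st0 ^^ Suc (length xs)) (q, 0, tape xs) =
     (case E (fst (pass R st xs)) of Acc \<Rightarrow> (1, int (length xs), tape (snd (pass R st xs)))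
       | Rej \<Rightarrow> (2, int (length xs), tape (snd (pass R st xs)))
       | Cont s \<Rightarrow> (senc (False, s), int (length xs) - 1, tape (snd (pass R st xs))))"
proof -
  obtain q' where S: "(step R E st0 ^^ length xs) (q, 0, tape xs) =
     (q', int (length xs), tape (snd (pass R st xs)))" "q' \<noteq> 1" "q' \<noteq> 2"
     "dec' st0 q' = (True, fst (pass R st xs))"
    using sweep[OF nz q, of "length xs" R E] by auto
  have t0: "tape (snd (pass R st xs)) (int (length xs)) = 0"
    by (simp add: tape_def pass_length)
  have upd: "(tape (snd (pass R st xs)))(int (length xs) := 0) = tape (snd (pass R st xs))"
    using t0 by (metis fun_upd_triv)
  have "(step R E st0 ^^ Suc (length xs)) (q, 0, tape xs) = step R E st0 (q', int (length xs), tape (snd (pass R st xs)))"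
    using S(1) by simp
  then show ?thesis using S(2,3,4) t0 upd
    by (simp add: gM_def gdelta_def split: res.splits)
qed



lemma round_cont:
  assumes nz: "\<forall>c\<in>set xs. c \<noteq> 0" and ne: "xs \<noteq> []" and q: "q \<noteq> 1" "q \<noteq> 2" "dec' st0 q = (True, st)"
    and E: "E (fst (pass R st xs)) = Cont s"
  shows "(step R E st0 ^^ (2 * length xs + 2)) (q, 0, tape xs) = (senc (True, s), 0, tape (snd (pass R st xs)))"
    and "\<And>j. j \<le> length xs \<Longrightarrow> (step R E st0 ^^ (Suc (length xs) + j)) (q, 0, tape xs) =
       (senc (False, s), int (length xs) - 1 - int j, tape (snd (pass R st xs)))"
proof -
  let ?ys = "snd (pass R st xs)"
  have nzy: "\<forall>c\<in>set ?ys. c \<noteq> 0" by (rule pass_nz[OF nz])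
  have ly: "length ?ys = length xs" by (simp add: pass_length)
  have F: "(step R E st0 ^^ Suc (length xs)) (q, 0, tape xs) = (senc (False, s), int (length xs) - 1, tape ?ys)"
    using round_first[OF nz q, of R E] unfolding E res.case .
  show B: "\<And>j. j \<le> length xs \<Longrightarrow> (step R E st0 ^^ (Suc (length xs) + j)) (q, 0, tape xs) =
       (senc (False, s), int (length xs) - 1 - int j, tape ?ys)"
  proof -
    fix j assume j: "j \<le> length xs"
    have e1: "(step R E st0 ^^ (Suc (length xs) + j)) (q, 0, tape xs) =
      (step R E st0 ^^ j) ((step R E st0 ^^ Suc (length xs)) (q, 0, tape xs))"
      by (simp only: add.commute[of "Suc (length xs)" j] funpow_add comp_apply)
    have bs: "(step R E st0 ^^ j) (senc (False, s), int (length ?ys) - 1, tape ?ys) =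
       (senc (False, s), int (length ?ys) - 1 - int j, tape ?ys)"
      by (rule back_sweep[OF nzy]) (auto simp: j ly)
    show "(step R E st0 ^^ (Suc (length xs) + j)) (q, 0, tape xs) =
       (senc (False, s), int (length xs) - 1 - int j, tape ?ys)"
      unfolding e1 F using bs unfolding ly .
  qed
  have t0: "tape ?ys (-1) = 0" by (simp add: tape_def)
  have eq2: "2 * length xs + 2 = Suc (Suc (length xs) + length xs)" by simp
  have upd: "(tape ?ys)(-1 := 0) = tape ?ys" using t0 by (metis fun_upd_triv)
  have "(step R E st0 ^^ (2 * length xs + 2)) (q, 0, tape xs) =
     step R E st0 ((step R E st0 ^^ (Suc (length xs) + length xs)) (q, 0, tape xs))"
    by (simp only: eq2 funpow.simps comp_apply)
  also have "\<dots> = (senc (True, s), 0, tape ?ys)"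
    using B[of "length xs"] t0 upd by (simp add: gM_def gdelta_def)
  finally show "(step R E st0 ^^ (2 * length xs + 2)) (q, 0, tape xs) = (senc (True, s), 0, tape ?ys)" .
qed


fun rounds :: "('a \<Rightarrow> nat \<Rightarrow> 'a \<times> nat) \<Rightarrow> ('a \<Rightarrow> 'a res) \<Rightarrow> nat \<Rightarrow> 'a \<Rightarrow> nat list \<Rightarrow> bool" where
  "rounds R E 0 st xs = False"
| "rounds R E (Suc N) st xs = (case E (fst (pass R st xs)) of Acc \<Rightarrow> True | Rej \<Rightarrow> False
     | Cont s \<Rightarrow> rounds R E N s (snd (pass R st xs)))"

lemma funpow_split: "(f ^^ (a + b)) x = (f ^^ a) ((f ^^ b) x)"
  by (simp only: funpow_add comp_apply)

lemma rounds_complete: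
  "rounds R E N st xs \<Longrightarrow> \<forall>c\<in>set xs. c \<noteq> 0 \<Longrightarrow> xs \<noteq> [] \<Longrightarrow> q \<noteq> 1 \<Longrightarrow> q \<noteq> 2 \<Longrightarrow>
   dec' st0 q = (True, st) \<Longrightarrow> fst ((step R E st0 ^^ (N * (2 * length xs + 2))) (q, 0, tape xs)) = 1"
proof (induction N arbitrary: q st xs)
  case 0
  then show ?case by simp
next
  case (Suc N)
  note q = Suc.prems(4,5,6)
  show ?case
  proof (cases "E (fst (pass R st xs))")
    case Acc
    have F: "(step R E st0 ^^ Suc (length xs)) (q, 0, tape xs) = (1, int (length xs), tape (snd (pass R st xs)))"
      using round_first[where R=R and E=E and ?st0.0=st0, OF Suc.prems(2) q] unfolding Acc res.case .
    have e: "Suc N * (2 * length xs + 2) = (N * (2 * length xs + 2) + length xs + 1) + Suc (length xs)" by simp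
    have sp: "(step R E st0 ^^ (Suc N * (2 * length xs + 2))) (q, 0, tape xs) =
      (step R E st0 ^^ (N * (2 * length xs + 2) + length xs + 1)) ((step R E st0 ^^ Suc (length xs)) (q, 0, tape xs))"
      unfolding e by (rule funpow_split)
    show ?thesis unfolding sp F acc_abs by simp
  next
    case Rej
    then show ?thesis using Suc.prems(1) by simp
  next
    case (Cont s)
    let ?ys = "snd (pass R st xs)"
    have F: "(step R E st0 ^^ (2 * length xs + 2)) (q, 0, tape xs) = (senc (True, s), 0, tape ?ys)"
      using round_cont(1)[where R=R and E=E and ?st0.0=st0, OF Suc.prems(2,3) q Cont] .
    have r: "rounds R E N s ?ys" using Suc.prems(1) Cont by simp
    have ly: "length ?ys = length xs" by (simp add: pass_length)
    have IH: "fst ((step R E st0 ^^ (N * (2 * length ?ys + 2))) (senc (True, s), 0, tape ?ys)) = 1"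
    proof -
      have nzy: "\<forall>c\<in>set ?ys. c \<noteq> 0" by (rule pass_nz[OF Suc.prems(2)])
      have ney: "?ys \<noteq> []" using ly Suc.prems(3) by auto
      show ?thesis by (rule Suc.IH[OF r nzy ney]) simp_all
    qed
    have e: "Suc N * (2 * length xs + 2) = N * (2 * length xs + 2) + (2 * length xs + 2)" by simp
    have sp: "(step R E st0 ^^ (Suc N * (2 * length xs + 2))) (q, 0, tape xs) =
      (step R E st0 ^^ (N * (2 * length xs + 2))) ((step R E st0 ^^ (2 * length xs + 2)) (q, 0, tape xs))"
      unfolding e by (rule funpow_split)
    show ?thesis unfolding sp F using IH unfolding ly .
  qed
qed

lemma rounds_sound:
  "fst ((step R E st0 ^^ t) (q, 0, tape xs)) = 1 \<Longrightarrow> \<forall>c\<in>set xs. c \<noteq> 0 \<Longrightarrow> xs \<noteq> [] \<Longrightarrow> q \<noteq> 1 \<Longrightarrow> q \<noteq> 2 \<Longrightarrow>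
   dec' st0 q = (True, st) \<Longrightarrow> \<exists>N. rounds R E N st xs"
proof (induction t arbitrary: q st xs rule: less_induct)
  case (less t)
  note nz = less.prems(2) and ne = less.prems(3) and q = less.prems(4,5,6)
  have small: False if tle: "t \<le> length xs"
  proof -
    obtain q' where "(step R E st0 ^^ t) (q, 0, tape xs) =
     (q', int t, tape (snd (pass R st (take t xs)) @ drop t xs))" "q' \<noteq> 1"
      using sweep[where R=R and E=E and ?st0.0=st0, OF nz q tle] by (elim exE conjE) simp
    then show False using less.prems(1) by simp
  qed
  show ?case
  proof (cases "E (fst (pass R st xs))")
    case Acc
    then have "rounds R E 1 st xs" by simp
    then show ?thesis by blast
  next
    case Rej
    have F: "(step R E st0 ^^ Suc (length xs)) (q, 0, tape xs) = (2, int (length xs), tape (snd (pass R st xs)))"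
      using round_first[where R=R and E=E and ?st0.0=st0, OF nz q] unfolding Rej res.case .
    have "\<not> t \<le> length xs" using small by blast
    define d where "d = t - Suc (length xs)"
    have d: "t = d + Suc (length xs)" using \<open>\<not> t \<le> length xs\<close> by (auto simp: d_def)
    have "(step R E st0 ^^ t) (q, 0, tape xs) = (2, int (length xs), tape (snd (pass R st xs)))"
      unfolding d funpow_split[where a=d and b="Suc (length xs)"] F dead ..
    then show ?thesis using less.prems(1) by simp
  next
    case (Cont s)
    let ?ys = "snd (pass R st xs)"
    have nt: "\<not> t \<le> length xs" using small by blast
    show ?thesis
    proof (cases "t < 2 * length xs + 2")
      case True
      define j where "j = t - Suc (length xs)"
      have j: "t = Suc (length xs) + j" "j \<le> length xs" using True nt by (auto simp: j_def)
      have "(step R E st0 ^^ t) (q, 0, tape xs) = (senc (False, s), int (length xs) - 1 - int j, tape ?ys)"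
        unfolding j(1) by (rule round_cont(2)[where R=R and E=E and ?st0.0=st0, OF nz ne q Cont j(2)])
      then show ?thesis using less.prems(1) by simp
    next
      case False
      define d where "d = t - (2 * length xs + 2)"
      have d: "t = d + (2 * length xs + 2)" using False by (auto simp: d_def)
      have F: "(step R E st0 ^^ (2 * length xs + 2)) (q, 0, tape xs) = (senc (True, s), 0, tape ?ys)"
        using round_cont(1)[where R=R and E=E and ?st0.0=st0, OF nz ne q Cont] .
      have d1: "fst ((step R E st0 ^^ d) (senc (True, s), 0, tape ?ys)) = 1"
        using less.prems(1) unfolding d funpow_split[where a=d and b="2 * length xs + 2"] F .
      have ly: "length ?ys = length xs" by (simp add: pass_length)
      have nzy: "\<forall>c\<in>set ?ys. c \<noteq> 0" by (rule pass_nz[OF nz])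
      have ney: "?ys \<noteq> []" using ly ne by auto
      have dl: "d < t" using d by simp
      obtain N where "rounds R E N s ?ys"
        using less.IH[OF dl d1 nzy ney] by (auto simp del: rounds.simps)
      then have "rounds R E (Suc N) st xs" using Cont by simp
      then show ?thesis by blast
    qed
  qed
qed




datatype sec = SU | SV | SK | SC
datatype syn = U0 | U1 | V0 | V1 | Kz | Kn | Ca | Ch | Cb | Err
datatype op = Adv | Tst
datatype wst = WB | WO | WR
datatype st = P0 syn | PA sec bool bool
  | PB sec "op option" bool wst "letter option" bool bool bool "op option"

instance letter :: countable by countable_datatype
instance sec :: countable by countable_datatype
instance syn :: countable by countable_datatype
instance op :: countable by countable_datatype
instance wst :: countable by countable_datatype
instance st :: countable by countable_datatype

instance letter :: finite
proof
  have "UNIV = {La, Lb}" using letter.exhaust by auto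
  then show "finite (UNIV :: letter set)" by (metis finite.emptyI finite.insertI)
qed
instance sec :: finite
proof
  have "UNIV = {SU, SV, SK, SC}" using sec.exhaust by auto
  then show "finite (UNIV :: sec set)" by (metis finite.emptyI finite.insertI)
qed
instance syn :: finite
proof
  have "UNIV = {U0, U1, V0, V1, Kz, Kn, Ca, Ch, Cb, Err}" using syn.exhaust by auto
  then show "finite (UNIV :: syn set)" by (metis finite.emptyI finite.insertI)
qed
instance op :: finite
proof
  have "UNIV = {Adv, Tst}" using op.exhaust by auto
  then show "finite (UNIV :: op set)" by (metis finite.emptyI finite.insertI)
qed
instance wst :: finite
proof
  have "UNIV = {WB, WO, WR}" using wst.exhaust by auto
  then show "finite (UNIV :: wst set)" by (metis finite.emptyI finite.insertI)
qed
instance st :: finite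
proof
  have "UNIV = range P0 \<union> (\<lambda>(a,b,c). PA a b c) ` UNIV \<union>
     (\<lambda>(a,b,c,d,e,f,g,h,i). PB a b c d e f g h i) ` UNIV"
  proof (rule set_eqI)
    fix x :: st show "x \<in> UNIV \<longleftrightarrow> x \<in> range P0 \<union> (\<lambda>(a,b,c). PA a b c) ` UNIV \<union>
     (\<lambda>(a,b,c,d,e,f,g,h,i). PB a b c d e f g h i) ` UNIV"
    proof (cases x)
      case (PA a b c) then show ?thesis by (auto intro!: image_eqI[where x="(a,b,c)"])
    next
      case (PB a b c d e f g h i) then show ?thesis by (auto intro!: image_eqI[where x="(a,b,c,d,e,f,g,h,i)"])
    qed auto
  qed
  then show "finite (UNIV :: st set)" by (metis finite_Un finite_UNIV finite_imageI)
qed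

fun R0 :: "syn \<Rightarrow> nat \<Rightarrow> syn" where
  "R0 U0 c = (if c = 1 \<or> c = 2 then U1 else if c = 4 then V0 else Err)"
| "R0 U1 c = (if c = 1 \<or> c = 2 then U1 else if c = 3 then U0 else Err)"
| "R0 V0 c = (if c = 1 \<or> c = 2 then V1 else if c = 4 then Kz else Err)"
| "R0 V1 c = (if c = 1 \<or> c = 2 then V1 else if c = 3 then V0 else Err)"
| "R0 Kz c = (if c = 5 then Kn else if c = 6 then Kz else if c = 7 then Ca else Err)"
| "R0 Kn c = (if c = 5 then Kn else if c = 6 then Kz else Err)"
| "R0 Ca c = (if c = 1 then Ca else if c = 2 then Ch else Err)"
| "R0 Ch c = (if c = 2 then Cb else Err)"
| "R0 Cb c = (if c = 1 then Cb else if c = 2 then Ch else Err)"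
| "R0 Err c = Err"

fun nsec :: "sec \<Rightarrow> sec" where
  "nsec SU = SV" | "nsec SV = SK" | "nsec SK = SK" | "nsec SC = SC"

definition chosen :: "letter option \<Rightarrow> letter" where
  "chosen lt = (case lt of None \<Rightarrow> La | Some l \<Rightarrow> l)"

definition letof :: "nat \<Rightarrow> letter" where "letof c = (if c = 1 then La else Lb)"
definition opof :: "nat \<Rightarrow> op" where "opof c = (if c = 1 then Adv else Tst)"

fun RW :: "sec \<Rightarrow> op option \<Rightarrow> bool \<Rightarrow> wst \<Rightarrow> letter option \<Rightarrow> bool \<Rightarrow> bool \<Rightarrow> bool \<Rightarrow> op option \<Rightarrow> nat \<Rightarrow> st \<times> nat" where
  "RW sec op dec w lt fl ar bor nb c =
   (if c = 4 then (if sec = SU then (PB SV op dec w lt fl ar bor nb, c)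
                   else (PB SK op dec w lt fl ar (op \<noteq> None \<and> dec) nb, c))
    else if c = 1 \<or> c = 2 then
      (if w \<noteq> WB then (PB sec op dec w lt fl ar bor nb, c) else
       (case op of None \<Rightarrow> (PB sec op dec WO lt fl ar bor nb, c)
        | Some Adv \<Rightarrow> (PB sec op dec WO lt fl ar bor nb, c + 8)
        | Some Tst \<Rightarrow> (if sec = SU then
             (case lt of None \<Rightarrow> (PB sec op dec WO (Some (letof c)) fl ar bor nb, c)
              | Some l \<Rightarrow> (PB sec op dec WO lt (fl \<or> enc_letter l \<noteq> c) ar bor nb, c))
            else (PB sec op dec (if c = enc_letter (chosen lt) then WO else WR) lt fl ar bor nb, c))))
    else if c = 11 \<or> c = 27 then
      (if sec = SU then (PB sec op dec WB lt (fl \<or> (op = Some Tst \<and> w = WB)) ar bor nb, c)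
       else (let rj = (c = 27 \<or> w = WR \<or> (op = Some Tst \<and> w = WB)) in
             (PB sec op dec WB lt fl (ar \<and> rj) bor nb, if rj then 27 else c)))
    else (PB sec op dec w lt fl ar bor nb, c))"

fun RB :: "sec \<Rightarrow> op option \<Rightarrow> bool \<Rightarrow> wst \<Rightarrow> letter option \<Rightarrow> bool \<Rightarrow> bool \<Rightarrow> bool \<Rightarrow> op option \<Rightarrow> nat \<Rightarrow> st \<times> nat" where
  "RB SK op dec w lt fl ar bor nb c =
     (if c = 5 then (PB SK op dec w lt fl ar bor nb, if bor then 6 else 5)
      else if c = 6 then (if bor then (PB SK op dec w lt fl ar False nb, 5) else (PB SK op dec w lt fl ar bor nb, 6))
      else if c = 7 then (PB SC op dec w lt (fl \<or> bor) ar bor nb, c)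
      else (PB SK op dec w lt fl ar bor nb, c))"
| "RB SC op dec w lt fl ar bor nb c =
     (if (c = 1 \<or> c = 2) \<and> nb = None then (PB SC op dec w lt fl ar bor (Some (opof c)), c + 8)
      else (PB SC op dec w lt fl ar bor nb, c))"
| "RB SU op dec w lt fl ar bor nb c = RW SU op dec w lt fl ar bor nb c"
| "RB SV op dec w lt fl ar bor nb c = RW SV op dec w lt fl ar bor nb c"

fun R :: "st \<Rightarrow> nat \<Rightarrow> st \<times> nat" where
  "R (P0 q) c = (P0 (R0 q c), c)"
| "R (PA sec fu fv) c = (if c = 4 then (PA (nsec sec) fu fv, c)
     else if c = 3 \<and> sec = SU \<and> \<not> fu then (PA sec True fv, 11)
     else if c = 3 \<and> sec = SV \<and> \<not> fv then (PA sec fu True, 11)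
     else (PA sec fu fv, c))"
| "R (PB sec op dec w lt fl ar bor nb) c = RB sec op dec w lt fl ar bor nb c"

definition PBi :: "op option \<Rightarrow> bool \<Rightarrow> st" where
  "PBi op dec = PB SU op dec WB None False True False None"

fun E :: "st \<Rightarrow> st res" where
  "E (P0 q) = (if q = Cb then Cont (PA SU False False) else Rej)"
| "E (PA sec fu fv) = (if fu \<noteq> fv then Rej else if fu then Cont (PA SU False False) else Cont (PBi None False))"
| "E (PB sec op dec w lt fl ar bor nb) = (if fl then Rej else
     (case op of None \<Rightarrow> (case nb of None \<Rightarrow> Rej | Some x \<Rightarrow> Cont (PBi (Some x) False))
      | Some _ \<Rightarrow> (case nb of None \<Rightarrow> (if ar then Acc else Rej) | Some x \<Rightarrow> Cont (PBi (Some x) True))))"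

lemma fixc_same[simp]: "fixc c c = c" by (simp add: fixc_def)
lemma fixc_num[simp]: "fixc c 11 = 11" "fixc c 27 = 27" "fixc c 5 = 5" "fixc c 6 = 6"
   "fixc c (Suc (Suc (Suc (Suc (Suc (Suc (Suc (Suc (enc_letter a))))))))) = enc_letter a + 8"
   "fixc c (enc_letter a + 8) = enc_letter a + 8"
  by (cases a; simp add: fixc_def)+

lemma pass_single: "pass R st [c] = (fst (R st c), [fixc c (snd (R st c))])"
  by (simp add: Let_def)

lemma pass_P0: "pass R (P0 q) zs = (P0 (foldl R0 q zs), zs)"
  by (induction zs arbitrary: q) (auto simp: Let_def)

lemma enc_letter_cases: "enc_letter a = 1 \<or> enc_letter a = 2"
  by (cases a) auto

definition wA :: "bool \<Rightarrow> letter list \<Rightarrow> nat list" where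
  "wA b w = map enc_letter w @ [if b then 11 else 3]"

fun wsA :: "nat \<Rightarrow> letter list list \<Rightarrow> nat list" where
  "wsA i [] = []"
| "wsA i (w # ws) = wA (0 < i) w @ wsA (i - 1) ws"

lemma pass_PA_copy: "\<forall>c\<in>set cs. c \<noteq> 3 \<and> c \<noteq> 4 \<Longrightarrow> pass R (PA sec fu fv) cs = (PA sec fu fv, cs)"
  by (induction cs) (auto simp: Let_def)

lemma enc_letter_simps[simp]: "enc_letter a \<noteq> 0" "enc_letter a \<noteq> 3" "enc_letter a \<noteq> 4"
  "enc_letter a \<noteq> 5" "enc_letter a \<noteq> 6" "enc_letter a \<noteq> 7" "enc_letter a < 32"
  "enc_letter a \<noteq> 11" "enc_letter a \<noteq> 27" "enc_letter a + 8 \<noteq> 1" "enc_letter a + 8 \<noteq> 2"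
  "enc_letter a + 8 \<noteq> 4" "enc_letter a + 8 \<noteq> 11" "enc_letter a + 8 \<noteq> 27" "enc_letter a + 8 \<noteq> 0"
  "enc_letter a + 8 < 32" "letof (enc_letter a) = a" "opof (enc_letter a) = (if a = La then Adv else Tst)"
  by (cases a; simp add: letof_def opof_def)+

lemma enc_letter_inj[simp]: "enc_letter a = enc_letter b \<longleftrightarrow> a = b"
  by (cases a; cases b; simp)

lemma letters_ne34: "\<forall>c\<in>set (map enc_letter w). c \<noteq> 3 \<and> c \<noteq> 4"
  by simp


lemma pass_wA_U: "pass R (PA SU fu fv) (wA b w) =
   (if \<not> b \<and> \<not> fu then (PA SU True fv, wA True w) else (PA SU fu fv, wA b w))"
  unfolding wA_def pass_append pass_PA_copy[OF letters_ne34] Let_def fst_conv snd_conv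
  by simp
lemma pass_wA_V: "pass R (PA SV fu fv) (wA b w) =
   (if \<not> b \<and> \<not> fv then (PA SV fu True, wA True w) else (PA SV fu fv, wA b w))"
  unfolding wA_def pass_append pass_PA_copy[OF letters_ne34] Let_def fst_conv snd_conv
  by simp


lemma pass_wsA_U_T: "pass R (PA SU True fv) (wsA i us) = (PA SU True fv, wsA i us)"
proof (induction us arbitrary: i)
  case Nil then show ?case by simp
next
  case (Cons w us)
  have "pass R (PA SU True fv) (wsA i (w # us)) = pass R (PA SU True fv) (wA (0 < i) w @ wsA (i - 1) us)" by simp
  also have "\<dots> = (PA SU True fv, wA (0 < i) w @ wsA (i - 1) us)"
    unfolding pass_append Let_def pass_wA_U by (simp add: Cons.IH)
  finally show ?case by simp
qed
lemma pass_wsA_V_T: "pass R (PA SV fu True) (wsA i us) = (PA SV fu True, wsA i us)"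
proof (induction us arbitrary: i)
  case Nil then show ?case by simp
next
  case (Cons w us)
  have "pass R (PA SV fu True) (wsA i (w # us)) = pass R (PA SV fu True) (wA (0 < i) w @ wsA (i - 1) us)" by simp
  also have "\<dots> = (PA SV fu True, wA (0 < i) w @ wsA (i - 1) us)"
    unfolding pass_append Let_def pass_wA_V by (simp add: Cons.IH)
  finally show ?case by simp
qed

lemma pass_wsA_U: "pass R (PA SU False fv) (wsA i us) = (PA SU (i < length us) fv, wsA (Suc i) us)"
proof (induction us arbitrary: i)
  case Nil then show ?case by simp
next
  case (Cons w us)
  show ?case
  proof (cases i)
    case 0
    have "pass R (PA SU False fv) (wsA i (w # us)) = pass R (PA SU False fv) (wA False w @ wsA 0 us)"
      using 0 by simp
    also have "\<dots> = (PA SU True fv, wA True w @ wsA 0 us)"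
      unfolding pass_append Let_def pass_wA_U by (simp add: pass_wsA_U_T)
    finally show ?thesis using 0 by simp
  next
    case (Suc j)
    have "pass R (PA SU False fv) (wsA i (w # us)) = pass R (PA SU False fv) (wA True w @ wsA j us)"
      using Suc by simp
    also have "\<dots> = (PA SU (j < length us) fv, wA True w @ wsA (Suc j) us)"
      unfolding pass_append Let_def pass_wA_U by (simp add: Cons.IH)
    finally show ?thesis using Suc by simp
  qed
qed

lemma pass_wsA_V: "pass R (PA SV fu False) (wsA i us) = (PA SV fu (i < length us), wsA (Suc i) us)"
proof (induction us arbitrary: i)
  case Nil then show ?case by simp
next
  case (Cons w us)
  show ?case
  proof (cases i)
    case 0
    have "pass R (PA SV fu False) (wsA i (w # us)) = pass R (PA SV fu False) (wA False w @ wsA 0 us)"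
      using 0 by simp
    also have "\<dots> = (PA SV fu True, wA True w @ wsA 0 us)"
      unfolding pass_append Let_def pass_wA_V by (simp add: pass_wsA_V_T)
    finally show ?thesis using 0 by simp
  next
    case (Suc j)
    have "pass R (PA SV fu False) (wsA i (w # us)) = pass R (PA SV fu False) (wA True w @ wsA j us)"
      using Suc by simp
    also have "\<dots> = (PA SV fu (j < length us), wA True w @ wsA (Suc j) us)"
      unfolding pass_append Let_def pass_wA_V by (simp add: Cons.IH)
    finally show ?thesis using Suc by simp
  qed
qed

lemma wsA_ge: "length us \<le> i \<Longrightarrow> wsA i us = wsA (Suc i) us"
proof (induction us arbitrary: i)
  case (Cons w us)
  then obtain j where "i = Suc j" "length us \<le> j" by (cases i) auto
  then show ?case using Cons.IH[of j] by simp
qed simp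

definition TA :: "letter list list \<Rightarrow> letter list list \<Rightarrow> nat list \<Rightarrow> nat list \<Rightarrow> nat \<Rightarrow> nat list" where
  "TA us vs bits y i = wsA i us @ [4] @ wsA i vs @ [4] @ bits @ [7] @ y"

lemma pass_TA:
  assumes "set bits \<subseteq> {5, 6}" "set y \<subseteq> {1, 2}"
  shows "pass R (PA SU False False) (TA us vs bits y i) = (PA SK (i < length us) (i < length vs), TA us vs bits y (Suc i))"
proof -
  have cp1: "\<forall>c\<in>set bits. c \<noteq> 3 \<and> c \<noteq> 4" using assms by auto
  have cp2: "\<forall>c\<in>set y. c \<noteq> 3 \<and> c \<noteq> 4" using assms by auto
  show ?thesis
    unfolding TA_def pass_append Let_def pass_wsA_U fst_conv snd_conv
    by (simp add: pass_wsA_V pass_PA_copy[OF cp1] pass_PA_copy[OF cp2] pass_single del: pass.simps)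
qed

definition wB :: "nat \<Rightarrow> bool \<Rightarrow> letter list \<Rightarrow> nat list" where
  "wB p r w = map (\<lambda>a. enc_letter a + 8) (take p w) @ map enc_letter (drop p w) @ [if r then 27 else 11]"

definition adv :: "op option \<Rightarrow> nat \<Rightarrow> nat" where
  "adv op p = (if op = Some Adv then Suc p else p)"

fun uw :: "op option \<Rightarrow> nat \<Rightarrow> letter option \<times> bool \<Rightarrow> letter list \<Rightarrow> letter option \<times> bool" where
  "uw (Some Tst) p (lt, fl) u = (if p < length u then (case lt of None \<Rightarrow> (Some (u ! p), fl)
      | Some l \<Rightarrow> (lt, fl \<or> l \<noteq> u ! p)) else (lt, True))"
| "uw _ p s u = s"

definition bad :: "letter \<Rightarrow> nat \<Rightarrow> letter list \<Rightarrow> bool" where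
  "bad l p v = (\<not> p < length v \<or> v ! p \<noteq> l)"

lemma RW_proc: "RW sec op dec w lt fl ar bor nb (enc_letter a + 8) = (PB sec op dec w lt fl ar bor nb, enc_letter a + 8)"
  by simp

lemma RW_nonWB: "w \<noteq> WB \<Longrightarrow> RW sec op dec w lt fl ar bor nb (enc_letter a) = (PB sec op dec w lt fl ar bor nb, enc_letter a)"
  using enc_letter_cases[of a] by auto

lemma pass_proc:
  assumes "sec = SU \<or> sec = SV"
  shows "pass R (PB sec op dec w lt fl ar bor nb) (map (\<lambda>a. enc_letter a + 8) xs) = (PB sec op dec w lt fl ar bor nb, map (\<lambda>a. enc_letter a + 8) xs)"
proof (induction xs)
  case Nil then show ?case by simp
next
  case (Cons a xs)
  have "R (PB sec op dec w lt fl ar bor nb) (enc_letter a + 8) = (PB sec op dec w lt fl ar bor nb, enc_letter a + 8)"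
    using assms RW_proc by auto
  then show ?case using Cons.IH by (simp add: Let_def del: RW.simps)
qed

lemma pass_nonWB:
  assumes "sec = SU \<or> sec = SV" "w \<noteq> WB"
  shows "pass R (PB sec op dec w lt fl ar bor nb) (map enc_letter xs) = (PB sec op dec w lt fl ar bor nb, map enc_letter xs)"
proof (induction xs)
  case Nil then show ?case by simp
next
  case (Cons a xs)
  have "R (PB sec op dec w lt fl ar bor nb) (enc_letter a) = (PB sec op dec w lt fl ar bor nb, enc_letter a)"
    using assms RW_nonWB by auto
  then show ?case using Cons.IH by (simp add: Let_def del: RW.simps)
qed

lemma cursorU: "R (PB SU op dec WB lt fl ar bor nb) (enc_letter a) =
  (PB SU op dec WO (fst (uw op 0 (lt, fl) [a])) (snd (uw op 0 (lt, fl) [a])) ar bor nb,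
   if op = Some Adv then enc_letter a + 8 else enc_letter a)"
  by (cases a; cases op; cases "the op"; cases lt; cases "the lt") (auto simp: letof_def)

lemma uw_pos: "p < length u \<Longrightarrow> uw op p s u = uw op 0 s [u ! p]"
  by (cases op; cases "the op"; cases s) (auto split: option.splits)

lemma uw_neg: "\<not> p < length u \<Longrightarrow> uw op p s u = (if op = Some Tst then (fst s, True) else s)"
  by (cases op; cases "the op"; cases s) auto

lemma adv_ge: "p \<le> adv op p" by (simp add: adv_def)

lemma pass_wB_U: "pass R (PB SU op dec WB lt fl ar bor nb) (wB p False u) =
  (PB SU op dec WB (fst (uw op p (lt, fl) u)) (snd (uw op p (lt, fl) u)) ar bor nb, wB (adv op p) False u)"
proof (cases "p < length u")
  case False
  have w1: "wB p False u = map (\<lambda>a. enc_letter a + 8) u @ [11]" using False by (simp add: wB_def)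
  have w2: "wB (adv op p) False u = map (\<lambda>a. enc_letter a + 8) u @ [11]" using False adv_ge[of p op]
    by (simp add: wB_def)
  show ?thesis unfolding w1 w2 pass_append Let_def pass_proc[OF disjI1[OF refl]] fst_conv snd_conv pass_single
    using False by (simp add: uw_neg)
next
  case True
  let ?a = "u ! p"
  have dr: "drop p u = ?a # drop (Suc p) u" using True by (simp add: Cons_nth_drop_Suc)
  have w1: "wB p False u = map (\<lambda>a. enc_letter a + 8) (take p u) @ [enc_letter ?a] @ map enc_letter (drop (Suc p) u) @ [11]"
    using dr by (simp add: wB_def)
  have w2: "wB (adv op p) False u = map (\<lambda>a. enc_letter a + 8) (take p u) @ [if op = Some Adv then enc_letter ?a + 8 else enc_letter ?a] @ map enc_letter (drop (Suc p) u) @ [11]"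
    using True dr by (simp add: wB_def adv_def take_Suc_conv_app_nth)
  have cp: "pass R (PB SU op dec WO l f ar bor nb) (map enc_letter xs) = (PB SU op dec WO l f ar bor nb, map enc_letter xs)" for l f xs
    by (rule pass_nonWB) auto
  show ?thesis unfolding w1 w2 pass_append Let_def pass_proc[OF disjI1[OF refl]] fst_conv snd_conv pass_single cursorU cp uw_pos[OF True]
    by (simp del: uw.simps)
qed

lemma cursorV: "R (PB SV op dec WB lt fl ar bor nb) (enc_letter a) =
  (PB SV op dec (if op = Some Tst \<and> a \<noteq> chosen lt then WR else WO) lt fl ar bor nb,
   if op = Some Adv then enc_letter a + 8 else enc_letter a)"
  by (cases a; cases op; cases "the op"; cases "chosen lt") auto

lemma termV: "R (PB SV op dec w lt fl ar bor nb) (if r then 27 else 11) =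
  (let rj = r \<or> w = WR \<or> (op = Some Tst \<and> w = WB) in (PB SV op dec WB lt fl (ar \<and> rj) bor nb, if rj then 27 else 11))"
  by (cases r) (auto simp: Let_def)

lemma pass_wB_V: "pass R (PB SV op dec WB lt fl ar bor nb) (wB p r v) =
  (let r' = r \<or> (op = Some Tst \<and> bad (chosen lt) p v) in
   (PB SV op dec WB lt fl (ar \<and> r') bor nb, wB (adv op p) r' v))"
proof (cases "p < length v")
  case False
  have w1: "wB p r v = map (\<lambda>a. enc_letter a + 8) v @ [if r then 27 else 11]" using False by (simp add: wB_def)
  have w2: "wB (adv op p) r' v = map (\<lambda>a. enc_letter a + 8) v @ [if r' then 27 else 11]" for r' using False adv_ge[of p op]
    by (simp add: wB_def)
  show ?thesis unfolding w1 w2 pass_append pass_proc[OF disjI2[OF refl]] fst_conv snd_conv pass_single termV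
    using False by (simp add: Let_def bad_def)
next
  case True
  let ?a = "v ! p"
  have dr: "drop p v = ?a # drop (Suc p) v" using True by (simp add: Cons_nth_drop_Suc)
  have w1: "wB p r v = map (\<lambda>a. enc_letter a + 8) (take p v) @ [enc_letter ?a] @ map enc_letter (drop (Suc p) v) @ [if r then 27 else 11]"
    using dr by (simp add: wB_def)
  have w2: "wB (adv op p) r' v = map (\<lambda>a. enc_letter a + 8) (take p v) @ [if op = Some Adv then enc_letter ?a + 8 else enc_letter ?a] @ map enc_letter (drop (Suc p) v) @ [if r' then 27 else 11]" for r'
    using True dr by (simp add: wB_def adv_def take_Suc_conv_app_nth)
  have cp: "w \<noteq> WB \<Longrightarrow> pass R (PB SV op dec w lt fl ar bor nb) (map enc_letter xs) = (PB SV op dec w lt fl ar bor nb, map enc_letter xs)" for w xs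
    by (rule pass_nonWB) auto
  define W where "W = (if op = Some Tst \<and> ?a \<noteq> chosen lt then WR else WO)"
  have ne: "W \<noteq> WB" by (simp add: W_def)
  define c1 where "c1 = (if op = Some Adv then enc_letter ?a + 8 else enc_letter ?a)"
  have s1: "pass R (PB SV op dec WB lt fl ar bor nb) (map (\<lambda>a. enc_letter a + 8) (take p v) @ [enc_letter ?a]) =
     (PB SV op dec W lt fl ar bor nb, map (\<lambda>a. enc_letter a + 8) (take p v) @ [c1])"
    unfolding pass_append pass_proc[OF disjI2[OF refl]] Let_def fst_conv snd_conv pass_single cursorV W_def c1_def
    by simp
  have s2: "pass R (PB SV op dec W lt fl ar bor nb) (map enc_letter (drop (Suc p) v) @ [if r then 27 else 11]) =
     (let rj = r \<or> W = WR in (PB SV op dec WB lt fl (ar \<and> rj) bor nb, map enc_letter (drop (Suc p) v) @ [if rj then 27 else 11]))"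
    unfolding pass_append cp[OF ne] Let_def fst_conv snd_conv pass_single termV using ne by simp
  have rr: "(r \<or> W = WR) = (r \<or> (op = Some Tst \<and> bad (chosen lt) p v))"
    using True by (auto simp: W_def bad_def)
  have "pass R (PB SV op dec WB lt fl ar bor nb) (wB p r v) = pass R (PB SV op dec WB lt fl ar bor nb)
     ((map (\<lambda>a. enc_letter a + 8) (take p v) @ [enc_letter ?a]) @ (map enc_letter (drop (Suc p) v) @ [if r then 27 else 11]))"
    unfolding w1 by simp
  also have "\<dots> = (let rj = r \<or> W = WR in (PB SV op dec WB lt fl (ar \<and> rj) bor nb,
      (map (\<lambda>a. enc_letter a + 8) (take p v) @ [c1]) @ map enc_letter (drop (Suc p) v) @ [if rj then 27 else 11]))"
    unfolding pass_append[of _ _ "_ @ [enc_letter ?a]"] s1 Let_def fst_conv snd_conv s2 by simp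
  finally show ?thesis unfolding rr Let_def w2 c1_def by simp
qed

lemma pass_usB: "pass R (PB SU op dec WB lt fl ar bor nb) (concat (map (wB p False) us)) =
  (PB SU op dec WB (fst (foldl (uw op p) (lt, fl) us)) (snd (foldl (uw op p) (lt, fl) us)) ar bor nb,
   concat (map (wB (adv op p) False) us))"
proof (induction us arbitrary: lt fl)
  case Nil then show ?case by simp
next
  case (Cons u us)
  obtain lt1 fl1 where u1: "uw op p (lt, fl) u = (lt1, fl1)" by force
  have "pass R (PB SU op dec WB lt fl ar bor nb) (concat (map (wB p False) (u # us))) =
    pass R (PB SU op dec WB lt fl ar bor nb) (wB p False u @ concat (map (wB p False) us))" by simp
  also have "\<dots> = (PB SU op dec WB (fst (foldl (uw op p) (lt1, fl1) us)) (snd (foldl (uw op p) (lt1, fl1) us)) ar bor nb,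
     wB (adv op p) False u @ concat (map (wB (adv op p) False) us))"
    unfolding pass_append Let_def pass_wB_U u1 fst_conv snd_conv Cons.IH by simp
  finally show ?case using u1 by simp
qed

definition vcells :: "nat \<Rightarrow> letter list list \<Rightarrow> bool list \<Rightarrow> nat list" where
  "vcells p vs rs = concat (map (\<lambda>(v, r). wB p r v) (zip vs rs))"

definition rsupd :: "op option \<Rightarrow> letter \<Rightarrow> nat \<Rightarrow> letter list list \<Rightarrow> bool list \<Rightarrow> bool list" where
  "rsupd op l p vs rs = map (\<lambda>(v, r). r \<or> (op = Some Tst \<and> bad l p v)) (zip vs rs)"

lemma rsupd_length: "length rs = length vs \<Longrightarrow> length (rsupd op l p vs rs) = length vs"
  by (simp add: rsupd_def)

lemma pass_vsB: "length rs = length vs \<Longrightarrow> pass R (PB SV op dec WB lt fl ar bor nb) (vcells p vs rs) =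
  (PB SV op dec WB lt fl (ar \<and> (\<forall>r\<in>set (rsupd op (chosen lt) p vs rs). r)) bor nb,
   vcells (adv op p) vs (rsupd op (chosen lt) p vs rs))"
proof (induction vs arbitrary: rs ar)
  case Nil then show ?case by (simp add: vcells_def rsupd_def)
next
  case (Cons v vs)
  then obtain r rs' where rs: "rs = r # rs'" "length rs' = length vs" by (cases rs) auto
  define r1 where "r1 = (r \<or> (op = Some Tst \<and> bad (chosen lt) p v))"
  have "pass R (PB SV op dec WB lt fl ar bor nb) (vcells p (v # vs) rs) =
    pass R (PB SV op dec WB lt fl ar bor nb) (wB p r v @ vcells p vs rs')" by (simp add: vcells_def rs)
  also have "\<dots> = (PB SV op dec WB lt fl ((ar \<and> r1) \<and> (\<forall>r\<in>set (rsupd op (chosen lt) p vs rs'). r)) bor nb,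
     wB (adv op p) r1 v @ vcells (adv op p) vs (rsupd op (chosen lt) p vs rs'))"
    unfolding pass_append Let_def pass_wB_V fst_conv snd_conv Cons.IH[OF rs(2)] r1_def by simp
  finally show ?case by (simp add: rs vcells_def rsupd_def r1_def)
qed

fun decb :: "bool \<Rightarrow> nat list \<Rightarrow> bool \<times> nat list" where
  "decb b [] = (b, [])"
| "decb b (d # ds) = (if b then (if d = 5 then (fst (decb True ds), 6 # snd (decb True ds)) else (False, 5 # ds))
     else (False, d # ds))"

lemma decb_False[simp]: "decb False ds = (False, ds)"
  by (cases ds) auto

lemma pass_K: "set ds \<subseteq> {5, 6} \<Longrightarrow> pass R (PB SK op dec w lt fl ar bor nb) ds =
   (PB SK op dec w lt fl ar (fst (decb bor ds)) nb, snd (decb bor ds))"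
proof (induction ds arbitrary: bor)
  case Nil then show ?case by simp
next
  case (Cons d ds)
  then have d: "d = 5 \<or> d = 6" and ds: "set ds \<subseteq> {5, 6}" by auto
  have IH: "pass R (PB SK op dec w lt fl ar b nb) ds = (PB SK op dec w lt fl ar (fst (decb b ds)) nb, snd (decb b ds))" for b
    by (rule Cons.IH[OF ds])
  from d show ?case
  proof
    assume d5: "d = 5"
    show ?thesis unfolding d5 using IH[of bor] IH[of False] by (cases bor) (simp_all add: Let_def)
  next
    assume d6: "d = 6"
    show ?thesis unfolding d6 using IH[of bor] IH[of False] by (cases bor) (simp_all add: Let_def)
  qed
qed

definition cc :: "nat \<Rightarrow> nat list \<Rightarrow> nat list" where
  "cc j y = map (\<lambda>c. c + 8) (take j y) @ drop j y"

lemma pass_C_marked: "set xs \<subseteq> {1, 2} \<Longrightarrow> pass R (PB SC op dec w lt fl ar bor nb) (map (\<lambda>c. c + 8) xs) =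
   (PB SC op dec w lt fl ar bor nb, map (\<lambda>c. c + 8) xs)"
  by (induction xs) (auto simp: Let_def)

lemma pass_C_some: "nb \<noteq> None \<Longrightarrow> set xs \<subseteq> {1, 2} \<Longrightarrow> pass R (PB SC op dec w lt fl ar bor nb) xs =
   (PB SC op dec w lt fl ar bor nb, xs)"
  by (induction xs) (auto simp: Let_def)

lemma pass_C: assumes y: "set y \<subseteq> {1, 2}"
  shows "pass R (PB SC op dec w lt fl ar bor None) (cc j y) = (if j < length y then
     (PB SC op dec w lt fl ar bor (Some (opof (y ! j))), cc (Suc j) y) else (PB SC op dec w lt fl ar bor None, cc j y))"
proof (cases "j < length y")
  case False
  then have "drop j y = []" by simp
  moreover have "set (take j y) \<subseteq> {1,2}" using y by (meson order_trans set_take_subset)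
  ultimately show ?thesis using False by (simp add: cc_def pass_append pass_C_marked)
next
  case True
  have dr: "drop j y = y ! j # drop (Suc j) y" using True by (simp add: Cons_nth_drop_Suc)
  have yj: "y ! j = 1 \<or> y ! j = 2" using y True nth_mem by blast
  have t: "set (take j y) \<subseteq> {1,2}" using y by (meson order_trans set_take_subset)
  have d: "set (drop (Suc j) y) \<subseteq> {1,2}" using y by (meson order_trans set_drop_subset)
  have c2: "cc (Suc j) y = map (\<lambda>c. c + 8) (take j y) @ [y ! j + 8] @ drop (Suc j) y"
    using True dr by (simp add: cc_def take_Suc_conv_app_nth)
  have r1: "RB SC op dec w lt fl ar bor None (y ! j) = (PB SC op dec w lt fl ar bor (Some (opof (y ! j))), y ! j + 8)"
    using yj by auto
  have f: "fixc (y ! j) (y ! j + 8) = y ! j + 8" using yj by (auto simp: fixc_def)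
  show ?thesis using True
    unfolding cc_def dr c2 pass_append Let_def pass_C_marked[OF t] fst_conv snd_conv
    by (simp add: r1 f pass_C_some[OF _ d] take_Suc_conv_app_nth Let_def del: RB.simps)
qed

definition TB :: "letter list list \<Rightarrow> letter list list \<Rightarrow> nat \<Rightarrow> bool list \<Rightarrow> nat list \<Rightarrow> nat list \<Rightarrow> nat \<Rightarrow> nat list" where
  "TB us vs p rs ds y j = concat (map (wB p False) us) @ [4] @ vcells p vs rs @ [4] @ ds @ [7] @ cc j y"

lemma pass_TB:
  assumes rs: "length rs = length vs" and ds: "set ds \<subseteq> {5, 6}" and y: "set y \<subseteq> {1, 2}"
  shows "pass R (PBi op dec) (TB us vs p rs ds y j) =
   (let lf = foldl (uw op p) (None, False) us; rs' = rsupd op (chosen (fst lf)) p vs rs;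
        db = decb (op \<noteq> None \<and> dec) ds;
        st = PB SC op dec WB (fst lf) (snd lf \<or> fst db) (\<forall>r\<in>set rs'. r) (fst db) None in
    if j < length y then (PB SC op dec WB (fst lf) (snd lf \<or> fst db) (\<forall>r\<in>set rs'. r) (fst db) (Some (opof (y ! j))),
        TB us vs (adv op p) rs' (snd db) y (Suc j))
    else (PB SC op dec WB (fst lf) (snd lf \<or> fst db) (\<forall>r\<in>set rs'. r) (fst db) None,
        TB us vs (adv op p) rs' (snd db) y j))"
proof -
  define lf where "lf = foldl (uw op p) (None, False) us"
  define rs' where "rs' = rsupd op (chosen (fst lf)) p vs rs"
  define db where "db = decb (op \<noteq> None \<and> dec) ds"
  have s1: "pass R (PBi op dec) (concat (map (wB p False) us) @ [4]) =
    (PB SV op dec WB (fst lf) (snd lf) True False None, concat (map (wB (adv op p) False) us) @ [4])"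
    unfolding PBi_def pass_append pass_usB Let_def fst_conv snd_conv pass_single lf_def by simp
  have s2: "pass R (PB SV op dec WB (fst lf) (snd lf) True False None) (vcells p vs rs @ [4]) =
    (PB SK op dec WB (fst lf) (snd lf) (\<forall>r\<in>set rs'. r) (op \<noteq> None \<and> dec) None, vcells (adv op p) vs rs' @ [4])"
    unfolding pass_append pass_vsB[OF rs] Let_def fst_conv snd_conv pass_single rs'_def by simp
  have s3: "pass R (PB SK op dec WB (fst lf) (snd lf) (\<forall>r\<in>set rs'. r) (op \<noteq> None \<and> dec) None) (ds @ [7]) =
    (PB SC op dec WB (fst lf) (snd lf \<or> fst db) (\<forall>r\<in>set rs'. r) (fst db) None, snd db @ [7])"
    unfolding pass_append pass_K[OF ds] Let_def fst_conv snd_conv pass_single db_def by simp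
  have e: "TB us vs p rs ds y j = (concat (map (wB p False) us) @ [4]) @ (vcells p vs rs @ [4]) @ (ds @ [7]) @ cc j y"
    by (simp add: TB_def)
  show ?thesis
    unfolding e pass_append[of _ _ "concat (map (wB p False) us) @ [4]"] s1 Let_def fst_conv snd_conv
      pass_append[of _ _ "vcells p vs rs @ [4]"] s2 pass_append[of _ _ "ds @ [7]"] s3 pass_C[OF y]
    by (simp add: lf_def[symmetric] rs'_def[symmetric] TB_def db_def)
qed

lemma ex_rounds: "(\<exists>N. rounds R' E' N st xs) \<longleftrightarrow> (case E' (fst (pass R' st xs)) of Acc \<Rightarrow> True | Rej \<Rightarrow> False
   | Cont s \<Rightarrow> (\<exists>N. rounds R' E' N s (snd (pass R' st xs))))"
proof
  assume "\<exists>N. rounds R' E' N st xs"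
  then obtain N where "rounds R' E' N st xs" by blast
  then show "case E' (fst (pass R' st xs)) of Acc \<Rightarrow> True | Rej \<Rightarrow> False
   | Cont s \<Rightarrow> (\<exists>N. rounds R' E' N s (snd (pass R' st xs)))"
    by (cases N) (auto split: res.splits)
next
  assume H: "case E' (fst (pass R' st xs)) of Acc \<Rightarrow> True | Rej \<Rightarrow> False
   | Cont s \<Rightarrow> (\<exists>N. rounds R' E' N s (snd (pass R' st xs)))"
  then show "\<exists>N. rounds R' E' N st xs"
  proof (cases "E' (fst (pass R' st xs))")
    case Acc then show ?thesis by (intro exI[of _ 1]) simp
  next
    case (Cont s)
    then obtain N where "rounds R' E' N s (snd (pass R' st xs))" using H by auto
    then show ?thesis using Cont by (intro exI[of _ "Suc N"]) simp
  qed auto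
qed

fun val :: "nat list \<Rightarrow> nat" where
  "val [] = 0"
| "val (d # ds) = (if d = 6 then 1 else 0) + 2 * val ds"

lemma decb_val: "set ds \<subseteq> {5, 6} \<Longrightarrow> fst (decb True ds) = (val ds = 0) \<and>
   (0 < val ds \<longrightarrow> val (snd (decb True ds)) = val ds - 1) \<and> set (snd (decb True ds)) \<subseteq> {5, 6}"
proof (induction ds)
  case Nil then show ?case by simp
next
  case (Cons d ds)
  then have d: "d = 5 \<or> d = 6" and IH: "fst (decb True ds) = (val ds = 0) \<and>
   (0 < val ds \<longrightarrow> val (snd (decb True ds)) = val ds - 1) \<and> set (snd (decb True ds)) \<subseteq> {5, 6}" by auto
  from d show ?case
  proof
    assume "d = 5" then show ?thesis using IH Cons.prems by auto
  next
    assume "d = 6" then show ?thesis using Cons.prems by auto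
  qed
qed

definition okU :: "letter list list \<Rightarrow> nat \<Rightarrow> bool" where
  "okU us p = (\<not> snd (foldl (uw (Some Tst) p) (None, False) us))"

definition chL :: "letter list list \<Rightarrow> nat \<Rightarrow> letter" where
  "chL us p = chosen (fst (foldl (uw (Some Tst) p) (None, False) us))"

fun G :: "letter list list \<Rightarrow> letter list list \<Rightarrow> op \<Rightarrow> op list \<Rightarrow> bool \<Rightarrow> nat \<Rightarrow> bool list \<Rightarrow> nat \<Rightarrow> bool" where
  "G us vs o' [] dec p rs kv = (\<not> (o' = Tst \<and> \<not> okU us p) \<and> \<not> (dec \<and> kv = 0) \<and>
     (\<forall>r\<in>set (rsupd (Some o') (chL us p) p vs rs). r))"
| "G us vs o' (o2 # rest) dec p rs kv = (\<not> (o' = Tst \<and> \<not> okU us p) \<and> \<not> (dec \<and> kv = 0) \<and>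
     G us vs o2 rest True (adv (Some o') p) (rsupd (Some o') (chL us p) p vs rs) (if dec then kv - 1 else kv))"

lemma foldl_uw_nonTst: "op \<noteq> Some Tst \<Longrightarrow> foldl (uw op p) s us = s"
proof (induction us arbitrary: s)
  case (Cons u us)
  have "uw op p s u = s" using Cons.prems by (cases op; cases "the op"; cases s) auto
  then show ?case using Cons by simp
qed simp

lemma rsupd_nonTst: "op \<noteq> Some Tst \<Longrightarrow> length rs = length vs \<Longrightarrow> rsupd op l p vs rs = rs"
proof (induction vs arbitrary: rs)
  case Nil then show ?case by (simp add: rsupd_def)
next
  case (Cons v vs)
  then obtain r rs' where "rs = r # rs'" "length rs' = length vs" by (cases rs) auto
  then show ?case using Cons by (simp add: rsupd_def)
qed

lemma rsupd_Adv: "rsupd (Some Adv) l p vs rs = rsupd (Some Adv) l' p vs rs"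
  by (simp add: rsupd_def)

lemma rounds_Suc_eq: "rounds R' E' (Suc N) st xs = (case E' (fst (pass R' st xs)) of Acc \<Rightarrow> True | Rej \<Rightarrow> False
     | Cont s \<Rightarrow> rounds R' E' N s (snd (pass R' st xs)))"
  by simp

lemma phaseB:
  assumes y: "set y \<subseteq> {1, 2}"
  shows "j \<le> length y \<Longrightarrow> length rs = length vs \<Longrightarrow> set ds \<subseteq> {5, 6} \<Longrightarrow> length y - j < N \<Longrightarrow>
    rounds R E N (PBi (Some o') dec) (TB us vs p rs ds y j) \<longleftrightarrow> G us vs o' (map opof (drop j y)) dec p rs (val ds)"
proof (induction "length y - j" arbitrary: j o' dec p rs ds N)
  case 0
  then obtain N' where N: "N = Suc N'" by (cases N) auto
  then have jy: "\<not> j < length y" "drop j y = []" using 0 by auto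
  define lf where "lf = foldl (uw (Some o') p) (None, False) us"
  have lfo: "snd lf = (o' = Tst \<and> \<not> okU us p)"
    by (cases o') (auto simp: lf_def okU_def foldl_uw_nonTst)
  have ch: "rsupd (Some o') (chosen (fst lf)) p vs rs = rsupd (Some o') (chL us p) p vs rs"
    by (cases o') (auto simp: lf_def chL_def rsupd_def)
  have db: "fst (decb dec ds) = (dec \<and> val ds = 0)" using decb_val[OF 0(4)] by (cases dec) auto
  show ?case
    unfolding N rounds_Suc_eq pass_TB[OF 0(3,4) y] Let_def
    using jy lfo ch db by (auto simp: lf_def[symmetric] simp del: rounds.simps)
next
  case (Suc m)
  then obtain N' where N: "N = Suc N'" by (cases N) auto
  have jy: "j < length y" "drop j y = y ! j # drop (Suc j) y" using Suc by (auto simp: Cons_nth_drop_Suc)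
  define lf where "lf = foldl (uw (Some o') p) (None, False) us"
  have lfo: "snd lf = (o' = Tst \<and> \<not> okU us p)"
    by (cases o') (auto simp: lf_def okU_def foldl_uw_nonTst)
  have ch: "rsupd (Some o') (chosen (fst lf)) p vs rs = rsupd (Some o') (chL us p) p vs rs"
    by (cases o') (auto simp: lf_def chL_def rsupd_def)
  have db: "fst (decb dec ds) = (dec \<and> val ds = 0)" using decb_val[OF Suc(5)] by (cases dec) auto
  have ds': "set (snd (decb dec ds)) \<subseteq> {5, 6}" using decb_val[OF Suc(5)] Suc(5) by (cases dec) auto
  have dv: "\<not> (dec \<and> val ds = 0) \<Longrightarrow> val (snd (decb dec ds)) = (if dec then val ds - 1 else val ds)"
    using decb_val[OF Suc(5)] by (cases dec) auto
  have IH: "rounds R E N' (PBi (Some (opof (y ! j))) True) (TB us vs (adv (Some o') p) (rsupd (Some o') (chL us p) p vs rs) (snd (decb dec ds)) y (Suc j)) \<longleftrightarrow>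
    G us vs (opof (y ! j)) (map opof (drop (Suc j) y)) True (adv (Some o') p) (rsupd (Some o') (chL us p) p vs rs) (val (snd (decb dec ds)))"
    by (rule Suc.hyps(1)) (use Suc.hyps(2) jy Suc.prems ds' N in \<open>auto simp: rsupd_length\<close>)
  show ?case
    unfolding N rounds_Suc_eq pass_TB[OF Suc(4,5) y] Let_def
    using jy lfo ch db IH dv by (auto simp: lf_def[symmetric] simp del: rounds.simps)
qed

lemma phaseB0:
  assumes y: "set y \<subseteq> {1, 2}" and rs: "length rs = length vs" and ds: "set ds \<subseteq> {5, 6}" and N: "length y < N"
  shows "rounds R E N (PBi None False) (TB us vs 0 rs ds y 0) \<longleftrightarrow>
    y \<noteq> [] \<and> G us vs (opof (hd y)) (map opof (tl y)) False 0 rs (val ds)"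
proof -
  obtain N' where N': "N = Suc N'" using N by (cases N) auto
  have lf: "foldl (uw None 0) (None, False) us = (None, False)" by (rule foldl_uw_nonTst) simp
  have r: "rsupd None l 0 vs rs = rs" for l by (rule rsupd_nonTst[OF _ rs]) simp
  have a: "adv None 0 = 0" by (simp add: adv_def)
  show ?thesis
  proof (cases y)
    case Nil
    then show ?thesis unfolding N' rounds_Suc_eq pass_TB[OF rs ds y] Let_def lf
      by simp
  next
    case (Cons c y')
    have d1: "drop 1 y = y'" using Cons by simp
    have "rounds R E N (PBi None False) (TB us vs 0 rs ds y 0) \<longleftrightarrow>
       rounds R E N' (PBi (Some (opof c)) False) (TB us vs 0 rs ds y 1)"
      unfolding N' rounds_Suc_eq pass_TB[OF rs ds y] Let_def lf r a
      using Cons by (simp del: rounds.simps)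
    also have "\<dots> \<longleftrightarrow> G us vs (opof c) (map opof (drop 1 y)) False 0 rs (val ds)"
      by (rule phaseB[OF y]) (use Cons rs ds N N' in auto)
    finally show ?thesis using Cons d1 by simp
  qed
qed

lemma phaseA:
  assumes bits: "set bits \<subseteq> {5, 6}" and y: "set y \<subseteq> {1, 2}"
  shows "i \<le> length us \<Longrightarrow> i \<le> length vs \<Longrightarrow> length us - i < N \<Longrightarrow>
    rounds R E N (PA SU False False) (TA us vs bits y i) \<longleftrightarrow>
    length us = length vs \<and> rounds R E (N - (length us - i) - 1) (PBi None False) (TA us vs bits y (length us))"
proof (induction "length us - i" arbitrary: i N)
  case 0
  then have e: "i = length us" by simp
  obtain N' where N': "N = Suc N'" using 0 by (cases N) auto
  show ?case
  proof (cases "i < length vs")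
    case True
    then show ?thesis unfolding N' rounds_Suc_eq pass_TA[OF bits y] using e by simp
  next
    case False
    then have "i = length vs" using 0 by simp
    moreover have "TA us vs bits y (Suc i) = TA us vs bits y i"
      unfolding TA_def using e \<open>i = length vs\<close> wsA_ge[of us i] wsA_ge[of vs i] by simp
    ultimately show ?thesis unfolding N' rounds_Suc_eq pass_TA[OF bits y] using e by (simp del: rounds.simps)
  qed
next
  case (Suc m)
  then have il: "i < length us" by simp
  obtain N' where N': "N = Suc N'" using Suc by (cases N) auto
  show ?case
  proof (cases "i < length vs")
    case True
    have IH: "rounds R E N' (PA SU False False) (TA us vs bits y (Suc i)) \<longleftrightarrow>
      length us = length vs \<and> rounds R E (N' - (length us - Suc i) - 1) (PBi None False) (TA us vs bits y (length us))"
      by (rule Suc.hyps(1)) (use Suc.hyps(2) Suc.prems il True N' in auto)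
    have ar: "N' - (length us - Suc i) - 1 = N - (length us - i) - 1" using N' il by simp
    show ?thesis unfolding N' rounds_Suc_eq pass_TA[OF bits y] using il True IH ar by (simp del: rounds.simps)
  next
    case False
    then show ?thesis unfolding N' rounds_Suc_eq pass_TA[OF bits y] using il Suc.prems by simp
  qed
qed

lemma wsA_all: "length ws \<le> i \<Longrightarrow> wsA i ws = concat (map (wB 0 False) ws)"
proof (induction ws arbitrary: i)
  case (Cons w ws)
  then obtain j where "i = Suc j" "length ws \<le> j" by (cases i) auto
  then show ?case using Cons.IH[of j] by (simp add: wA_def wB_def)
qed simp

lemma vcells_all: "vcells 0 vs (replicate (length vs) False) = concat (map (wB 0 False) vs)"
  by (induction vs) (auto simp: vcells_def)

lemma TA_TB: "length us = length vs \<Longrightarrow> TA us vs bits y (length us) = TB us vs 0 (replicate (length vs) False) bits y 0"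
  unfolding TA_def TB_def using wsA_all[of us "length us"] wsA_all[of vs "length us"] vcells_all[of vs]
  by (simp add: cc_def)

lemma phase0: "rounds R E (Suc N) (P0 U0) z \<longleftrightarrow> foldl R0 U0 z = Cb \<and> rounds R E N (PA SU False False) z"
  by (simp add: pass_P0)

lemma rounds_mono: "rounds R' E' N st xs \<Longrightarrow> N \<le> N' \<Longrightarrow> rounds R' E' N' st xs"
proof (induction N arbitrary: N' st xs)
  case (Suc N)
  then obtain M where "N' = Suc M" "N \<le> M" by (cases N') auto
  then show ?case using Suc by (auto split: res.splits)
qed simp

fun tpos :: "nat \<Rightarrow> op list \<Rightarrow> nat set" where
  "tpos p [] = {}"
| "tpos p (Adv # r) = tpos (Suc p) r"
| "tpos p (Tst # r) = insert p (tpos p r)"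

lemma rsupd_nth: "i < length vs \<Longrightarrow> length rs = length vs \<Longrightarrow>
   rsupd op l p vs rs ! i = (rs ! i \<or> (op = Some Tst \<and> bad l p (vs ! i)))"
  by (simp add: rsupd_def)

lemma G_iff: "length rs = length vs \<Longrightarrow> G us vs o' rest dec p rs kv \<longleftrightarrow>
   (\<forall>q\<in>tpos p (o' # rest). okU us q) \<and> (if dec then 1 else 0) + length rest \<le> kv \<and>
   (\<forall>i<length vs. rs ! i \<or> (\<exists>q\<in>tpos p (o' # rest). bad (chL us q) q (vs ! i)))"
proof (induction rest arbitrary: o' dec p rs kv)
  case Nil
  show ?case
  proof (cases o')
    case Adv
    then show ?thesis using Nil rsupd_nth[OF _ Nil] by (auto simp: all_set_conv_all_nth rsupd_length)
  next
    case Tst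
    then show ?thesis using Nil rsupd_nth[OF _ Nil] by (auto simp: all_set_conv_all_nth rsupd_length)
  qed
next
  case (Cons o2 rest)
  define rs' where "rs' = rsupd (Some o') (chL us p) p vs rs"
  have l': "length rs' = length vs" using Cons.prems by (simp add: rs'_def rsupd_length)
  have n': "\<And>i. i < length vs \<Longrightarrow> rs' ! i = (rs ! i \<or> (o' = Tst \<and> bad (chL us p) p (vs ! i)))"
    unfolding rs'_def using rsupd_nth[OF _ Cons.prems] by simp
  have G: "G us vs o' (o2 # rest) dec p rs kv = (\<not> (o' = Tst \<and> \<not> okU us p) \<and> \<not> (dec \<and> kv = 0) \<and>
     G us vs o2 rest True (adv (Some o') p) rs' (if dec then kv - 1 else kv))" by (simp add: rs'_def)
  show ?case
  proof (cases o')
    case Adv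
    have a: "adv (Some o') p = Suc p" using Adv by (simp add: adv_def)
    show ?thesis unfolding G Cons.IH[OF l'] a using Adv n' by auto
  next
    case Tst
    have a: "adv (Some o') p = p" using Tst by (simp add: adv_def)
    show ?thesis unfolding G Cons.IH[OF l'] a using Tst n' by auto
  qed
qed




lemma uw_true: "snd (foldl (uw (Some Tst) q) (l, True) us)"
proof (induction us arbitrary: l)
  case (Cons u us)
  show ?case
  proof (cases "q < length u")
    case True then show ?thesis using Cons by (cases l) auto
  next
    case False then show ?thesis using Cons by simp
  qed
qed simp

lemma uw_some: "foldl (uw (Some Tst) q) (Some l, f) us = (Some l, f \<or> \<not> (\<forall>u\<in>set us. q < length u \<and> u ! q = l))"
  by (induction us arbitrary: f) auto

lemma okU_iff: "okU us q \<longleftrightarrow> (\<forall>u\<in>set us. q < length u \<and> u ! q = chL us q)"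
proof (cases us)
  case Nil then show ?thesis by (simp add: okU_def chL_def)
next
  case (Cons u us')
  show ?thesis
  proof (cases "q < length u")
    case True
    then show ?thesis using Cons by (auto simp: okU_def chL_def uw_some chosen_def)
  next
    case False
    then have "\<not> okU us q" using Cons uw_true[of q None us'] by (simp add: okU_def)
    then show ?thesis using Cons False by auto
  qed
qed

lemma chL_hd: "q < length u \<Longrightarrow> chL (u # us) q = u ! q"
  by (simp add: chL_def uw_some chosen_def)

fun vp :: "op list \<Rightarrow> bool" where
  "vp [] = True"
| "vp (Adv # r) = vp r"
| "vp (Tst # Tst # r) = vp r"
| "vp _ = False"

fun fm :: "(nat \<Rightarrow> letter) \<Rightarrow> nat \<Rightarrow> op list \<Rightarrow> ltl" where
  "fm L p (Adv # r) = Nxt (fm L (Suc p) r)"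
| "fm L p (Tst # Tst # r) = (if Tst \<in> set r then Conj (Lit (L p)) (fm L p r) else Lit (L p))"
| "fm L p _ = Lit La"

lemma fm_size: "vp ops \<Longrightarrow> Tst \<in> set ops \<Longrightarrow> fsize (fm L p ops) + 1 \<le> length ops"
  by (induction L p ops rule: fm.induct) auto

lemma tpos_ge: "q \<in> tpos p r \<Longrightarrow> p \<le> q"
  by (induction p r rule: tpos.induct) auto

lemma tpos_ne: "Tst \<in> set r \<Longrightarrow> tpos p r \<noteq> {}"
  by (induction p r rule: tpos.induct) auto

lemma tpos_empty: "Tst \<notin> set r \<Longrightarrow> tpos p r = {}"
  by (induction p r rule: tpos.induct) auto

lemma fm_sem: "vp ops \<Longrightarrow> Tst \<in> set ops \<Longrightarrow>
  holds w (Suc p) (fm L p ops) \<longleftrightarrow> (\<forall>q\<in>tpos p ops. q < length w \<and> w ! q = L q)"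
proof (induction L p ops rule: fm.induct)
  case (1 L p r)
  then have IH: "holds w (Suc (Suc p)) (fm L (Suc p) r) \<longleftrightarrow> (\<forall>q\<in>tpos (Suc p) r. q < length w \<and> w ! q = L q)"
    and ne: "tpos (Suc p) r \<noteq> {}" using tpos_ne[of r "Suc p"] by auto
  have "(\<forall>q\<in>tpos (Suc p) r. q < length w \<and> w ! q = L q) \<Longrightarrow> Suc p < length w"
  proof -
    assume a: "\<forall>q\<in>tpos (Suc p) r. q < length w \<and> w ! q = L q"
    obtain q where "q \<in> tpos (Suc p) r" using ne by blast
    then show ?thesis using a tpos_ge[of q "Suc p" r] by force
  qed
  then show ?case using IH by auto
next
  case (2 L p r)
  show ?case
  proof (cases "Tst \<in> set r")
    case True
    then show ?thesis using 2 by auto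
  next
    case False
    have "tpos p r = {}" using False by (rule tpos_empty)
    then show ?thesis using False by auto
  qed
qed auto

fun cons :: "ltl \<Rightarrow> (nat \<times> letter) set" where
  "cons (Lit c) = {(0, c)}"
| "cons (Conj f g) = cons f \<union> cons g"
| "cons (Nxt f) = (\<lambda>(q, c). (Suc q, c)) ` cons f"

lemma cons_fin: "finite (cons f)" by (induction f) auto
lemma cons_ne: "cons f \<noteq> {}" by (induction f) auto

lemma cons_sem: "holds w (Suc p) f \<longleftrightarrow> (\<forall>(q, c)\<in>cons f. p + q < length w \<and> w ! (p + q) = c)"
proof (induction f arbitrary: p)
  case (Lit c) then show ?case by auto
next
  case (Conj f g) then show ?case by (simp add: ball_Un)
next
  case (Nxt f)
  have ne: "cons f \<noteq> {}" by (rule cons_ne)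
  have "(\<forall>(q, c)\<in>cons f. Suc p + q < length w \<and> w ! (Suc p + q) = c) \<Longrightarrow> Suc p < length w"
  proof -
    assume a: "\<forall>(q, c)\<in>cons f. Suc p + q < length w \<and> w ! (Suc p + q) = c"
    obtain q c where "(q, c) \<in> cons f" using ne by auto
    then show ?thesis using a by fastforce
  qed
  then show ?case using Nxt[of "Suc p"] by auto
qed

lemma cons_size: "Max (fst ` cons f) + 2 * card (fst ` cons f) \<le> fsize f + 1"
proof (induction f)
  case (Lit c) then show ?case by simp
next
  case (Conj f g)
  let ?A = "fst ` cons f" and ?B = "fst ` cons g"
  have fA: "finite ?A" "?A \<noteq> {}" and fB: "finite ?B" "?B \<noteq> {}" using cons_fin cons_ne by auto
  have c: "card (?A \<union> ?B) \<le> card ?A + card ?B" by (rule card_Un_le)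
  have m: "Max (?A \<union> ?B) = max (Max ?A) (Max ?B)" using fA fB by (simp add: Max_Un)
  have e: "fst ` cons (Conj f g) = ?A \<union> ?B" by auto
  show ?case unfolding e m using c Conj.IH by simp
next
  case (Nxt f)
  let ?A = "fst ` cons f"
  have fA: "finite ?A" "?A \<noteq> {}" using cons_fin cons_ne by auto
  have e: "fst ` cons (Nxt f) = Suc ` ?A" by force
  have c: "card (Suc ` ?A) = card ?A" by (simp add: card_image)
  have m: "Max (Suc ` ?A) = Suc (Max ?A)" using fA by (simp add: mono_Max_commute[symmetric] mono_Suc)
  show ?case unfolding e c m using Nxt.IH by simp
qed

definition tt :: "nat set \<Rightarrow> nat \<Rightarrow> op list" where
  "tt P q = (if q \<in> P then [Tst, Tst] else [])"

fun gen :: "nat set \<Rightarrow> nat \<Rightarrow> op list" where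
  "gen P 0 = tt P 0"
| "gen P (Suc n) = gen P n @ Adv # tt P (Suc n)"

definition cntA :: "op list \<Rightarrow> nat" where "cntA xs = length (filter (\<lambda>x. x = Adv) xs)"

lemma tpos_app: "tpos p (xs @ ys) = tpos p xs \<union> tpos (p + cntA xs) ys"
  by (induction p xs rule: tpos.induct) (auto simp: cntA_def)

lemma vp_app: "vp xs \<Longrightarrow> vp ys \<Longrightarrow> vp (xs @ ys)"
  by (induction xs rule: vp.induct) auto

lemma vp_gen: "vp (gen P n)"
  by (induction n) (auto simp: tt_def intro!: vp_app)

lemma cntA_gen: "cntA (gen P n) = n"
  by (induction n) (auto simp: tt_def cntA_def)

lemma tpos_gen: "tpos 0 (gen P n) = P \<inter> {..n}"
proof (induction n)
  case 0 then show ?case by (auto simp: tt_def)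
next
  case (Suc n)
  have "tpos 0 (gen P (Suc n)) = (P \<inter> {..n}) \<union> tpos (Suc n) (tt P (Suc n))"
    by (simp add: tpos_app Suc cntA_gen)
  also have "\<dots> = P \<inter> {..Suc n}" by (auto simp: tt_def le_Suc_eq)
  finally show ?case .
qed

lemma length_gen: "length (gen P n) = n + 2 * card (P \<inter> {..n})"
proof (induction n)
  case 0
  have "P \<inter> {..0} = (if 0 \<in> P then {0} else {})" by auto
  then show ?case by (simp add: tt_def)
next
  case (Suc n)
  have e: "P \<inter> {..Suc n} = (if Suc n \<in> P then insert (Suc n) (P \<inter> {..n}) else P \<inter> {..n})"
    by (auto simp: le_Suc_eq)
  show ?case using Suc by (simp add: e tt_def)
qed

lemma Tst_gen: "q \<in> P \<Longrightarrow> q \<le> n \<Longrightarrow> Tst \<in> set (gen P n)"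
proof (induction n)
  case 0 then show ?case by (simp add: tt_def)
next
  case (Suc n)
  then show ?case by (cases "q = Suc n") (auto simp: tt_def)
qed

lemma foldl_Err: "foldl R0 Err y = Err"
  by (induction y) auto

lemma vp_Tst: "vp (Tst # x) \<longleftrightarrow> (\<exists>x'. x = Tst # x' \<and> vp x')"
  by (cases x rule: vp.cases) auto

lemma opof_simps[simp]: "opof 1 = Adv" "opof (Suc 0) = Adv" "opof 2 = Tst" by (auto simp: opof_def)

lemma cert_dfa: "set y \<subseteq> {1, 2} \<Longrightarrow> (foldl R0 Cb y = Cb \<longleftrightarrow> vp (map opof y)) \<and>
  (foldl R0 Ca y = Cb \<longleftrightarrow> vp (map opof y) \<and> 2 \<in> set y) \<and>
  (foldl R0 Ch y = Cb \<longleftrightarrow> (\<exists>r. y = 2 # r \<and> vp (map opof r)))"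
proof (induction y)
  case Nil then show ?case by simp
next
  case (Cons c r)
  then have c: "c = 1 \<or> c = 2" and IH: "(foldl R0 Cb r = Cb \<longleftrightarrow> vp (map opof r)) \<and>
  (foldl R0 Ca r = Cb \<longleftrightarrow> vp (map opof r) \<and> 2 \<in> set r) \<and>
  (foldl R0 Ch r = Cb \<longleftrightarrow> (\<exists>r'. r = 2 # r' \<and> vp (map opof r')))" by auto
  from c show ?case
  proof
    assume c1: "c = 1"
    show ?thesis using IH unfolding c1 by (simp add: foldl_Err)
  next
    assume c2: "c = 2"
    have "vp (map opof (2 # r)) \<longleftrightarrow> (\<exists>r'. r = 2 # r' \<and> vp (map opof r'))"
    proof
      assume "vp (map opof (2 # r))"
      then obtain x' where x: "map opof r = Tst # x'" "vp x'" using vp_Tst by auto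
      then obtain c' r' where r: "r = c' # r'" "opof c' = Tst" "map opof r' = x'" by (cases r) auto
      have "c' = 2" using r Cons.prems by (auto simp: opof_def)
      then show "\<exists>r'. r = 2 # r' \<and> vp (map opof r')" using r x by auto
    next
      assume "\<exists>r'. r = 2 # r' \<and> vp (map opof r')"
      then show "vp (map opof (2 # r))" by auto
    qed
    then show ?thesis using IH unfolding c2 by (simp add: foldl_Err)
  qed
qed

definition EW :: "letter list list \<Rightarrow> nat list" where "EW ws = concat (map enc_word ws)"

lemma EW_simps[simp]: "EW [] = []" "EW (ws @ [w]) = EW ws @ map enc_letter w @ [3]"
  by (auto simp: EW_def enc_word_def)

fun Inv :: "syn \<Rightarrow> nat list \<Rightarrow> bool" where
  "Inv U0 x = (\<exists>us. (\<forall>w\<in>set us. w \<noteq> []) \<and> x = EW us)"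
| "Inv U1 x = (\<exists>us w. (\<forall>w\<in>set us. w \<noteq> []) \<and> w \<noteq> [] \<and> x = EW us @ map enc_letter w)"
| "Inv V0 x = (\<exists>us vs. (\<forall>w\<in>set (us @ vs). w \<noteq> []) \<and> x = EW us @ [4] @ EW vs)"
| "Inv V1 x = (\<exists>us vs w. (\<forall>w\<in>set (us @ vs). w \<noteq> []) \<and> w \<noteq> [] \<and> x = EW us @ [4] @ EW vs @ map enc_letter w)"
| "Inv Kz x = (\<exists>us vs bits. (\<forall>w\<in>set (us @ vs). w \<noteq> []) \<and> set bits \<subseteq> {5, 6} \<and> (bits = [] \<or> last bits = 6) \<and>
      x = EW us @ [4] @ EW vs @ [4] @ bits)"
| "Inv Kn x = (\<exists>us vs bits. (\<forall>w\<in>set (us @ vs). w \<noteq> []) \<and> set bits \<subseteq> {5, 6} \<and> bits \<noteq> [] \<and> last bits = 5 \<and>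
      x = EW us @ [4] @ EW vs @ [4] @ bits)"
| "Inv _ x = True"

lemma letc: "c = 1 \<or> c = 2 \<Longrightarrow> [c] = map enc_letter [letof c]"
  by (auto simp: letof_def)

lemma Inv_step:
  assumes I: "Inv q x" and c: "c \<in> {1..6}"
  shows "Inv (R0 q c) (x @ [c])"
proof (cases q)
  case U0
  then obtain us where us: "\<forall>w\<in>set us. w \<noteq> []" "x = EW us" using I by auto
  show ?thesis
  proof (cases "c = 1 \<or> c = 2")
    case True
    have "Inv U1 (x @ [c])" unfolding Inv.simps
      by (intro exI[of _ us] exI[of _ "[letof c]"]) (use us letc[OF True] in auto)
    then show ?thesis using U0 True by auto
  next
    case False
    show ?thesis
    proof (cases "c = 4")
      case True
      have "Inv V0 (x @ [4])" using us by (simp, intro exI[of _ us] exI[of _ "[]"], simp)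
      then show ?thesis using U0 True by simp
    qed (use U0 False in simp)
  qed
next
  case U1
  then obtain us w where us: "\<forall>w\<in>set us. w \<noteq> []" "w \<noteq> []" "x = EW us @ map enc_letter w" using I by auto
  show ?thesis
  proof (cases "c = 1 \<or> c = 2")
    case True
    have "Inv U1 (x @ [c])" unfolding Inv.simps
      by (intro exI[of _ us] exI[of _ "w @ [letof c]"]) (use us letc[OF True] in auto)
    then show ?thesis using U1 True by auto
  next
    case False
    show ?thesis
    proof (cases "c = 3")
      case True
      have "Inv U0 (x @ [3])" unfolding Inv.simps
        by (intro exI[of _ "us @ [w]"]) (use us in auto)
      then show ?thesis using U1 True by simp
    qed (use U1 False in simp)
  qed
next
  case V0
  then obtain us vs where us: "\<forall>w\<in>set (us @ vs). w \<noteq> []" "x = EW us @ [4] @ EW vs" using I by auto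
  show ?thesis
  proof (cases "c = 1 \<or> c = 2")
    case True
    have "Inv V1 (x @ [c])" unfolding Inv.simps
      by (intro exI[of _ us] exI[of _ vs] exI[of _ "[letof c]"]) (use us letc[OF True] in auto)
    then show ?thesis using V0 True by auto
  next
    case False
    show ?thesis
    proof (cases "c = 4")
      case True
      have "Inv Kz (x @ [4])" using us by (simp, intro exI[of _ us] exI[of _ vs] exI[of _ "[]"], simp)
      then show ?thesis using V0 True by simp
    qed (use V0 False in simp)
  qed
next
  case V1
  then obtain us vs w where us: "\<forall>w\<in>set (us @ vs). w \<noteq> []" "w \<noteq> []" "x = EW us @ [4] @ EW vs @ map enc_letter w" using I by auto
  show ?thesis
  proof (cases "c = 1 \<or> c = 2")
    case True
    have "Inv V1 (x @ [c])" unfolding Inv.simps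
      by (intro exI[of _ us] exI[of _ vs] exI[of _ "w @ [letof c]"]) (use us letc[OF True] in auto)
    then show ?thesis using V1 True by auto
  next
    case False
    show ?thesis
    proof (cases "c = 3")
      case True
      have "Inv V0 (x @ [3])" unfolding Inv.simps
        by (intro exI[of _ us] exI[of _ "vs @ [w]"]) (use us in auto)
      then show ?thesis using V1 True by simp
    qed (use V1 False in simp)
  qed
next
  case Kz
  then obtain us vs bits where us: "\<forall>w\<in>set (us @ vs). w \<noteq> []" "set bits \<subseteq> {5, 6}" "bits = [] \<or> last bits = 6"
      "x = EW us @ [4] @ EW vs @ [4] @ bits" using I by auto
  have i1: "Inv Kz (x @ [6])" unfolding Inv.simps
    by (intro exI[of _ us] exI[of _ vs] exI[of _ "bits @ [6]"]) (use us in auto)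
  have i2: "Inv Kn (x @ [5])" unfolding Inv.simps
    by (intro exI[of _ us] exI[of _ vs] exI[of _ "bits @ [5]"]) (use us in auto)
  note i = i1 i2
  show ?thesis using Kz i by auto
next
  case Kn
  then obtain us vs bits where us: "\<forall>w\<in>set (us @ vs). w \<noteq> []" "set bits \<subseteq> {5, 6}" "bits \<noteq> []" "last bits = 5"
      "x = EW us @ [4] @ EW vs @ [4] @ bits" using I by auto
  have i1: "Inv Kz (x @ [6])" unfolding Inv.simps
    by (intro exI[of _ us] exI[of _ vs] exI[of _ "bits @ [6]"]) (use us in auto)
  have i2: "Inv Kn (x @ [5])" unfolding Inv.simps
    by (intro exI[of _ us] exI[of _ vs] exI[of _ "bits @ [5]"]) (use us in auto)
  note i = i1 i2
  show ?thesis using Kn i by auto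
qed auto

lemma Inv_run: "set x \<subseteq> {1..6} \<Longrightarrow> Inv (foldl R0 U0 x) x"
proof (induction x rule: rev_induct)
  case Nil then show ?case by (auto intro: exI[of _ "[]"])
next
  case (snoc c x)
  then show ?case using Inv_step[of "foldl R0 U0 x" x c] by simp
qed

lemma eb0: "enc_bin 0 = []" by simp
lemma ebS: "0 < k \<Longrightarrow> enc_bin k = (if k mod 2 = 0 then 5 else 6) # enc_bin (k div 2)" by simp
declare enc_bin.simps[simp del]

lemma enc_bin_set: "set (enc_bin k) \<subseteq> {5, 6}"
proof (induction k rule: less_induct)
  case (less k)
  show ?case
  proof (cases "k = 0")
    case True then show ?thesis by (simp add: eb0)
  next
    case False then show ?thesis using less[of "k div 2"] by (simp add: ebS)
  qed
qed

lemma val_enc_bin: "val (enc_bin k) = k"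
proof (induction k rule: less_induct)
  case (less k)
  show ?case
  proof (cases "k = 0")
    case True then show ?thesis by (simp add: eb0)
  next
    case False then show ?thesis using less[of "k div 2"] by (simp add: ebS) presburger
  qed
qed

lemma val_pos: "r \<noteq> [] \<Longrightarrow> last r = 6 \<Longrightarrow> 0 < val r"
  by (induction r) (auto split: if_splits)

lemma bits_enc: "set bits \<subseteq> {5, 6} \<Longrightarrow> bits = [] \<or> last bits = 6 \<Longrightarrow> enc_bin (val bits) = bits"
proof (induction bits)
  case Nil then show ?case by (simp add: eb0)
next
  case (Cons d r)
  show ?case
  proof (cases "r = []")
    case True
    then have "d = 6" using Cons.prems by simp
    then show ?thesis using True by (simp add: ebS eb0)
  next
    case False
    then have l: "last r = 6" using Cons.prems by simp
    have IH: "enc_bin (val r) = r" using Cons.IH Cons.prems l by simp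
    have p: "0 < val r" using val_pos[OF False l] .
    have d: "d = 5 \<or> d = 6" using Cons.prems by simp
    show ?thesis using d p IH by (auto simp: ebS)
  qed
qed

lemma R0_letter: "R0 U0 (enc_letter a) = U1" "R0 V0 (enc_letter a) = V1"
  "R0 U1 (enc_letter a) = U1" "R0 V1 (enc_letter a) = V1"
  by (cases a; simp)+

lemma R0_3: "R0 U1 3 = U0" "R0 V1 3 = V0" by simp_all

lemma dfa_U1: "foldl R0 U1 (map enc_letter w) = U1"
  by (induction w) (auto simp: R0_letter simp del: R0.simps)

lemma dfa_V1: "foldl R0 V1 (map enc_letter w) = V1"
  by (induction w) (auto simp: R0_letter simp del: R0.simps)

lemma dfa_EW_U: "\<forall>w\<in>set us. w \<noteq> [] \<Longrightarrow> foldl R0 U0 (EW us) = U0"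
proof (induction us)
  case (Cons w us)
  then obtain a w' where w: "w = a # w'" by (cases w) auto
  then show ?case using Cons by (simp add: EW_def enc_word_def R0_letter dfa_U1 R0_3 del: R0.simps)
qed (simp)

lemma dfa_EW_V: "\<forall>w\<in>set us. w \<noteq> [] \<Longrightarrow> foldl R0 V0 (EW us) = V0"
proof (induction us)
  case (Cons w us)
  then obtain a w' where w: "w = a # w'" by (cases w) auto
  then show ?case using Cons by (simp add: EW_def enc_word_def R0_letter dfa_V1 R0_3 del: R0.simps)
qed (simp)

lemma dfa_bin: "0 < k \<Longrightarrow> foldl R0 Kz (enc_bin k) = Kz \<and> foldl R0 Kn (enc_bin k) = Kz"
proof (induction k rule: less_induct)
  case (less k)
  show ?case
  proof (cases "k div 2 = 0")
    case True
    then have "k = 1" using less.prems by auto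
    then show ?thesis by (simp add: ebS eb0)
  next
    case False
    have e: "enc_bin k = (if k mod 2 = 0 then 5 else 6) # enc_bin (k div 2)" using less.prems by (rule ebS)
    have IH: "foldl R0 Kz (enc_bin (k div 2)) = Kz" "foldl R0 Kn (enc_bin (k div 2)) = Kz"
      using less.IH[of "k div 2"] less.prems False by auto
    show ?thesis unfolding e using IH by (cases "k mod 2 = 0") auto
  qed
qed

lemma dfa_bin': "foldl R0 Kz (enc_bin k) = Kz"
  using dfa_bin[of k] by (cases "k = 0") (auto simp: eb0)

lemma enc_inst_EW: "enc_inst us vs k = EW us @ [4] @ EW vs @ [4] @ enc_bin k"
  by (simp add: enc_inst_def EW_def)

lemma dfa_complete:
  assumes "\<forall>w\<in>set (us @ vs). w \<noteq> []" "set y \<subseteq> {1, 2}" "vp (map opof y)" "2 \<in> set y"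
  shows "foldl R0 U0 (enc_inst us vs k @ [7] @ y) = Cb"
proof -
  have "foldl R0 U0 (enc_inst us vs k @ [7]) = Ca"
    unfolding enc_inst_EW using assms(1) by (simp add: dfa_EW_U dfa_EW_V dfa_bin')
  then show ?thesis using cert_dfa[OF assms(2)] assms(3,4) by simp
qed

lemma R0_7: "q \<noteq> Kz \<Longrightarrow> R0 q 7 = Err"
  by (cases q) auto

lemma dfa_sound:
  assumes x: "set x \<subseteq> {1..6}" and y: "set y \<subseteq> {1, 2}" and acc: "foldl R0 U0 (x @ [7] @ y) = Cb"
  shows "\<exists>us vs k. (\<forall>w\<in>set (us @ vs). w \<noteq> []) \<and> x = enc_inst us vs k \<and> vp (map opof y) \<and> 2 \<in> set y"
proof -
  let ?q = "foldl R0 U0 x"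
  have e: "foldl R0 U0 (x @ [7] @ y) = foldl R0 (R0 ?q 7) y" by simp
  have qk: "?q = Kz"
  proof (rule ccontr)
    assume "?q \<noteq> Kz"
    then have "foldl R0 U0 (x @ [7] @ y) = Err" using e R0_7[OF \<open>?q \<noteq> Kz\<close>] foldl_Err by simp
    then show False using acc by simp
  qed
  have c: "foldl R0 Ca y = Cb" using acc e qk by simp
  have "Inv Kz x" using Inv_run[OF x] qk by simp
  then obtain us vs bits where I: "\<forall>w\<in>set (us @ vs). w \<noteq> []" "set bits \<subseteq> {5, 6}" "bits = [] \<or> last bits = 6"
      "x = EW us @ [4] @ EW vs @ [4] @ bits" by auto
  have "x = enc_inst us vs (val bits)" unfolding enc_inst_EW bits_enc[OF I(2,3)] using I(4) .
  then show ?thesis using I(1) cert_dfa[OF y] c by blast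
qed




lemma wsA0: "wsA 0 ws = EW ws"
  by (induction ws) (auto simp: EW_def wA_def enc_word_def)

lemma z_TA: "enc_inst us vs k @ [7] @ y = TA us vs (enc_bin k) y 0"
  by (simp add: TA_def enc_inst_EW wsA0)

lemma alg_main:
  assumes y: "set y \<subseteq> {1, 2}" and N: "length us + length y + 2 < N"
    and ne: "\<forall>w\<in>set (us @ vs). w \<noteq> []" and vy: "vp (map opof y)" "2 \<in> set y"
  shows "rounds R E (Suc N) (P0 U0) (enc_inst us vs k @ [7] @ y) \<longleftrightarrow>
    length us = length vs \<and> (\<forall>q\<in>tpos 0 (map opof y). okU us q) \<and> length y - 1 \<le> k \<and>
    (\<forall>i<length vs. \<exists>q\<in>tpos 0 (map opof y). bad (chL us q) q (vs ! i))"
proof -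
  have bits: "set (enc_bin k) \<subseteq> {5, 6}" by (rule enc_bin_set)
  have yne: "y \<noteq> []" using vy by auto
  have ops: "opof (hd y) # map opof (tl y) = map opof y" using yne by (cases y) auto
  have "rounds R E (Suc N) (P0 U0) (enc_inst us vs k @ [7] @ y) \<longleftrightarrow>
     rounds R E N (PA SU False False) (TA us vs (enc_bin k) y 0)"
  proof -
    have d: "foldl R0 U0 (TA us vs (enc_bin k) y 0) = Cb"
      using dfa_complete[OF ne y vy, of k] unfolding z_TA .
    show ?thesis unfolding phase0 z_TA using d by simp
  qed
  also have "\<dots> \<longleftrightarrow> length us = length vs \<and> rounds R E (N - length us - 1) (PBi None False) (TA us vs (enc_bin k) y (length us))"
    using phaseA[OF bits y, of 0 us vs N] N by simp
  also have "\<dots> \<longleftrightarrow> length us = length vs \<and> rounds R E (N - length us - 1) (PBi None False) (TB us vs 0 (replicate (length vs) False) (enc_bin k) y 0)"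
    using TA_TB by auto
  also have "\<dots> \<longleftrightarrow> length us = length vs \<and> G us vs (opof (hd y)) (map opof (tl y)) False 0 (replicate (length vs) False) k"
    using phaseB0[OF y _ bits, of "replicate (length vs) False" vs "N - length us - 1" us] N yne
    by (auto simp: val_enc_bin)
  also have "\<dots> \<longleftrightarrow> length us = length vs \<and> (\<forall>q\<in>tpos 0 (map opof y). okU us q) \<and> length y - 1 \<le> k \<and>
    (\<forall>i<length vs. \<exists>q\<in>tpos 0 (map opof y). bad (chL us q) q (vs ! i))"
    unfolding G_iff[OF length_replicate] ops by simp
  finally show ?thesis .
qed

lemma sep_from:
  assumes vy: "vp (map opof y)" "2 \<in> set y"
    and okU: "\<forall>q\<in>tpos 0 (map opof y). okU us q" and kk: "length y - 1 \<le> k"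
    and bv: "\<forall>i<length vs. \<exists>q\<in>tpos 0 (map opof y). bad (chL us q) q (vs ! i)"
  shows "\<exists>f. fsize f \<le> k \<and> separates f us vs"
proof -
  let ?ops = "map opof y"
  let ?f = "fm (chL us) 0 ?ops"
  have T: "Tst \<in> set ?ops" using vy(2) by force
  have sz: "fsize ?f \<le> k" using fm_size[OF vy(1) T, of "chL us" 0] kk by simp
  have sem: "models w ?f \<longleftrightarrow> (\<forall>q\<in>tpos 0 ?ops. q < length w \<and> w ! q = chL us q)" for w
    unfolding models_def using fm_sem[OF vy(1) T, of w 0 "chL us"] by simp
  have "\<forall>u\<in>set us. models u ?f" using okU unfolding sem okU_iff by blast
  moreover have "\<forall>v\<in>set vs. \<not> models v ?f"
  proof
    fix v assume "v \<in> set vs"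
    then obtain i where i: "i < length vs" "vs ! i = v" by (auto simp: in_set_conv_nth)
    then obtain q where "q \<in> tpos 0 ?ops" "bad (chL us q) q v" using bv by blast
    then show "\<not> models v ?f" unfolding sem bad_def by blast
  qed
  ultimately show ?thesis using sz unfolding separates_def by blast
qed

lemma alg_sound:
  assumes x: "set x \<subseteq> {1..6}" and y: "set y \<subseteq> {1, 2}" and r: "rounds R E N (P0 U0) (x @ [7] @ y)"
  shows "x \<in> LEARN_LTL_X_AND"
proof -
  obtain N' where N': "N = Suc N'" using r by (cases N) auto
  have d: "foldl R0 U0 (x @ [7] @ y) = Cb" using r unfolding N' phase0 by simp
  obtain us vs k where uv: "\<forall>w\<in>set (us @ vs). w \<noteq> []" "x = enc_inst us vs k" "vp (map opof y)" "2 \<in> set y"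
    using dfa_sound[OF x y d] by blast
  define N2 where "N2 = max N' (length us + length y + 3)"
  have r2: "rounds R E (Suc N2) (P0 U0) (enc_inst us vs k @ [7] @ y)"
    using rounds_mono[OF r, of "Suc N2"] uv(2) N' by (simp add: N2_def)
  have c: "length us = length vs \<and> (\<forall>q\<in>tpos 0 (map opof y). okU us q) \<and> length y - 1 \<le> k \<and>
    (\<forall>i<length vs. \<exists>q\<in>tpos 0 (map opof y). bad (chL us q) q (vs ! i))"
    using alg_main[OF y _ uv(1) uv(3,4), of N2 k] r2 by (simp add: N2_def)
  obtain f where "fsize f \<le> k" "separates f us vs" using sep_from[OF uv(3,4)] c by blast
  then show ?thesis unfolding LEARN_LTL_X_AND_def using uv c by blast
qed

fun oc :: "op \<Rightarrow> nat" where "oc Adv = 1" | "oc Tst = 2"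

lemma opof_oc1: "opof (oc a) = a" by (cases a) (auto simp: opof_def)
lemma oc12: "oc a \<in> {1, 2}" by (cases a) auto

lemma opof_oc: "map opof (map oc ops) = ops"
  by (induction ops) (auto simp: opof_oc1)

lemma oc_set: "set (map oc ops) \<subseteq> {1, 2}"
  using oc12 by auto

lemma fsize_pos: "1 \<le> fsize f" by (cases f) auto

lemma EW_len: "length us \<le> length (EW us)" "u \<in> set us \<Longrightarrow> length u < length (EW us)"
  by (induction us) (auto simp: EW_def enc_word_def)

lemma alg_complete:
  assumes L: "x \<in> LEARN_LTL_X_AND"
  shows "\<exists>y. set y \<subseteq> {1, 2} \<and> length y \<le> 3 * length x + 2 \<and> rounds R E (4 * length x + 6) (P0 U0) (x @ [7] @ y)"
proof -
  obtain us vs k f where uv: "x = enc_inst us vs k" "length us = length vs" "\<forall>w\<in>set (us @ vs). w \<noteq> []"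
      "fsize f \<le> k" "separates f us vs"
    using L unfolding LEARN_LTL_X_AND_def by blast
  define f' where "f' = (if us = [] then Lit La else f)"
  have f'k: "fsize f' \<le> k" using uv(4) fsize_pos[of f] by (simp add: f'_def)
  have f's: "separates f' us vs" using uv(2,5) by (cases "us = []") (auto simp: f'_def separates_def)
  define P where "P = fst ` cons f'"
  have Pf: "finite P" "P \<noteq> {}" using cons_fin cons_ne by (auto simp: P_def)
  define M where "M = Max P"
  have PM: "P \<inter> {..M} = P" using Pf by (auto simp: M_def)
  have MP: "M \<in> P" using Pf by (simp add: M_def)
  define ops where "ops = gen P M"
  define y where "y = map oc ops"
  have y12: "set y \<subseteq> {1, 2}" unfolding y_def by (rule oc_set)
  have oy: "map opof y = ops" unfolding y_def by (rule opof_oc)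
  have vp: "vp (map opof y)" by (simp add: oy ops_def vp_gen)
  have T: "Tst \<in> set ops" unfolding ops_def using Tst_gen[OF MP] by simp
  have two: "2 \<in> set y"
  proof -
    have "oc Tst \<in> oc ` set ops" using T by blast
    then show ?thesis by (simp add: y_def)
  qed
  have ly: "length y = M + 2 * card P" by (simp add: y_def ops_def length_gen PM)
  have tp: "tpos 0 (map opof y) = P" by (simp add: oy ops_def tpos_gen PM)
  have cost: "length y - 1 \<le> k" using cons_size[of f'] f'k ly by (simp add: P_def M_def)
  have semc: "models w f' \<longleftrightarrow> (\<forall>(q, c)\<in>cons f'. q < length w \<and> w ! q = c)" for w
    unfolding models_def using cons_sem[of w 0 f'] by simp
  have ok: "\<forall>q\<in>tpos 0 (map opof y). okU us q"
  proof
    fix q assume "q \<in> tpos 0 (map opof y)"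
    then obtain c where qc: "(q, c) \<in> cons f'" by (auto simp: tp P_def)
    show "okU us q"
    proof (cases us)
      case Nil then show ?thesis by (simp add: okU_iff)
    next
      case (Cons u0 us')
      have "q < length u0 \<and> u0 ! q = c" using f's qc semc Cons unfolding separates_def by fastforce
      then have ch: "chL us q = c" using Cons chL_hd by simp
      show ?thesis unfolding okU_iff ch using f's qc semc unfolding separates_def by fastforce
    qed
  qed
  have bv: "\<forall>i<length vs. \<exists>q\<in>tpos 0 (map opof y). bad (chL us q) q (vs ! i)"
  proof (intro allI impI)
    fix i assume i: "i < length vs"
    then obtain u0 us' where us: "us = u0 # us'" using uv(2) by (cases us) auto
    have "\<not> models (vs ! i) f'" using f's i unfolding separates_def by auto
    then obtain q c where qc: "(q, c) \<in> cons f'" "\<not> (q < length (vs ! i) \<and> vs ! i ! q = c)"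
      unfolding semc by auto
    have "q < length u0 \<and> u0 ! q = c" using f's qc(1) semc us unfolding separates_def by fastforce
    then have ch: "chL us q = c" using us chL_hd by simp
    have "q \<in> tpos 0 (map opof y)" using qc(1) by (force simp: tp P_def)
    then show "\<exists>q\<in>tpos 0 (map opof y). bad (chL us q) q (vs ! i)" using ch qc(2) by (auto simp: bad_def)
  qed
  have xe: "length (EW us) \<le> length x" by (simp add: uv(1) enc_inst_EW)
  have xl: "length us \<le> length x" "\<And>u. u \<in> set us \<Longrightarrow> length u < length x"
    using EW_len(1)[of us] xe apply simp
    using EW_len(2)[of _ us] xe by fastforce
  have ylen: "length y \<le> 3 * length x + 2"
  proof (cases us)
    case Nil
    then have "P = {0}" by (simp add: P_def f'_def)
    then show ?thesis using ly by (simp add: M_def)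
  next
    case (Cons u0 us')
    have "\<forall>q\<in>P. q < length u0"
      using f's semc Cons unfolding separates_def P_def by fastforce
    then have sub: "P \<subseteq> {..<length u0}" by auto
    have "card P \<le> length u0" using card_mono[OF _ sub] by simp
    moreover have "M < length u0" using sub MP by auto
    moreover have "length u0 < length x" using xl(2) Cons by simp
    ultimately show ?thesis using ly by simp
  qed
  have r: "rounds R E (Suc (length us + length y + 3)) (P0 U0) (x @ [7] @ y)"
    unfolding uv(1) using alg_main[OF y12 _ uv(3) vp two, of "length us + length y + 3" k] uv(2) ok cost bv by simp
  have "rounds R E (4 * length x + 6) (P0 U0) (x @ [7] @ y)"
    by (rule rounds_mono[OF r]) (use xl ylen in simp)
  then show ?thesis using y12 ylen by blast
qed

lemma acc_mono: "fst ((step R' E' st0 ^^ t) c) = 1 \<Longrightarrow> t \<le> T \<Longrightarrow> fst ((step R' E' st0 ^^ T) c) = 1"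
proof -
  assume a: "fst ((step R' E' st0 ^^ t) c) = 1" and tT: "t \<le> T"
  obtain q h tp where e: "(step R' E' st0 ^^ t) c = (q, h, tp)" by (cases "(step R' E' st0 ^^ t) c") auto
  have q: "q = 1" using a e by simp
  have "(step R' E' st0 ^^ T) c = (step R' E' st0 ^^ (T - t)) ((step R' E' st0 ^^ t) c)"
    using tT funpow_split[where f="step R' E' st0" and a="T - t" and b=t and x=c] by simp
  also have "\<dots> = (1, h, tp)" unfolding e q acc_abs ..
  finally show ?thesis by simp
qed

lemma tm_init_tape: "tm_init z = (0, 0, tape z)"
  by (simp add: tm_init_def tape_def)

lemma dec0: "dec' (P0 U0) 0 = (True, P0 U0)" by (simp add: dec'_def)

lemma z_nz: "set x \<subseteq> {1..6} \<Longrightarrow> set y \<subseteq> {1, 2} \<Longrightarrow> \<forall>c\<in>set (x @ [7] @ y). (c::nat) \<noteq> 0"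
  by fastforce

lemma main_iff:
  fixes x :: "nat list"
  assumes x: "set x \<subseteq> {1..6}"
  shows "x \<in> LEARN_LTL_X_AND \<longleftrightarrow> (\<exists>y. set y \<subseteq> {1, 2} \<and> length y \<le> 48 * (length x + 1) ^ 2 \<and>
      accepts_within (gM R E (P0 U0)) (x @ [7] @ y) (48 * (length x + 1) ^ 2))"
proof -
  let ?T = "48 * (length x + 1) ^ 2"
  show ?thesis
  proof
    assume L: "x \<in> LEARN_LTL_X_AND"
    obtain y where y: "set y \<subseteq> {1, 2}" "length y \<le> 3 * length x + 2"
      and r: "rounds R E (4 * length x + 6) (P0 U0) (x @ [7] @ y)"
      using alg_complete[OF L] by blast
    let ?z = "x @ [7] @ y"
    have a: "fst ((step R E (P0 U0) ^^ ((4 * length x + 6) * (2 * length ?z + 2))) (0, 0, tape ?z)) = 1"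
      by (rule rounds_complete[OF r z_nz[OF x y(1)]]) (simp_all add: dec0)
    have b1: "4 * length x + 6 \<le> 6 * (length x + 1)" by simp
    have b2: "2 * length ?z + 2 \<le> 8 * (length x + 1)" using y(2) by simp
    have "(4 * length x + 6) * (2 * length ?z + 2) \<le> (6 * (length x + 1)) * (8 * (length x + 1))"
      by (rule mult_le_mono[OF b1 b2])
    also have "\<dots> = ?T" by (simp add: power2_eq_square algebra_simps)
    finally have le: "(4 * length x + 6) * (2 * length ?z + 2) \<le> ?T" .
    have acc: "accepts_within (gM R E (P0 U0)) ?z ?T"
      unfolding accepts_within_def tm_init_tape using acc_mono[OF a le] .
    have yl: "length y \<le> ?T"
    proof -
      have "length y \<le> 3 * length x + 2" by (rule y(2))
      also have "\<dots> \<le> 48 * (length x + 1)" by simp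
      also have "\<dots> \<le> ?T" by (simp add: power2_eq_square)
      finally show ?thesis .
    qed
    show "\<exists>y. set y \<subseteq> {1, 2} \<and> length y \<le> ?T \<and> accepts_within (gM R E (P0 U0)) (x @ [7] @ y) ?T"
      using y(1) yl acc by blast
  next
    assume "\<exists>y. set y \<subseteq> {1, 2} \<and> length y \<le> ?T \<and> accepts_within (gM R E (P0 U0)) (x @ [7] @ y) ?T"
    then obtain y where y: "set y \<subseteq> {1, 2}" and acc: "accepts_within (gM R E (P0 U0)) (x @ [7] @ y) ?T" by blast
    have "fst ((step R E (P0 U0) ^^ ?T) (0, 0, tape (x @ [7] @ y))) = 1"
      using acc unfolding accepts_within_def tm_init_tape .
    then obtain N where "rounds R E N (P0 U0) (x @ [7] @ y)"
      using rounds_sound[OF _ z_nz[OF x y]] dec0 by fastforce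
    then show "x \<in> LEARN_LTL_X_AND" by (rule alg_sound[OF x y])
  qed
qed

theorem theorem2:
  shows "in_NP LEARN_LTL_X_AND"
  unfolding in_NP_def
  apply (rule exI[of _ "gM R E (P0 U0)"])
  apply (rule exI[of _ 48])
  apply (rule exI[of _ 2])
  using gM_wf[of R E "P0 U0"] main_iff by (simp add: gM_def)


end
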